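(* Under the hypotheses and definitions below, for all $0\le l,m\le N-1$, $$\sum_{n\in\mathbb Z}\phi_l(n)\psi_m(n)=\delta_{l,m}.$$
   Context: Fix $0<q<1$, $N\ge1$, $t>0$, $0\le\alpha_i<a_j\le1$ for all $i,j$; $(x;q)_\infty=\prod_{k\ge0}(1-xq^k)$. Constants $b,c$ with $\max_i\alpha_i<b<\min_ia_i\le1<c$; $\tau(n)=b^n$ for $n\ge0$, $\tau(n)=c^n$ for $n<0$. $\phi_l(n)=\tau(n)\frac{1}{2\pi i}\oint_Ddv\,\frac{e^{-vt}}{v^{n+N}}\frac{1}{v-a_{l+1}}\prod_{j=1}^l\frac{v-\alpha_j}{v-a_j}\prod_{k=1}^N\frac{(q\alpha_k/v;q)_\infty}{(qv/a_k;q)_\infty}$ and $\psi_l(n)=\frac{a_{l+1}-\alpha_{l+1}}{\tau(n)}\frac{1}{2\pi i}\oint_{C_r}\frac{dz}{z}\frac{e^{zt}z^{n+N}}{z-\alpha_{l+1}}\prod_{j=1}^l\frac{z-a_j}{z-\alpha_j}\prod_{k=1}^N\frac{(qz/a_k;q)_\infty}{(q\alpha_k/z;q)_\infty}$, where $D$ is a positively oriented contour enclosing $a_1,\dots,a_N$ but not $0$ nor $a_kq^{-j}$ ($j\ge1$), and $C_r$ a positively oriented contour enclosing $0$ and all $\alpha_iq^j$ ($j\ge0$). *)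

theory Defs
  imports "HOL-Analysis.Analysis"
begin

definition cint :: "(real \<Rightarrow> complex) \<Rightarrow> (complex \<Rightarrow> complex) \<Rightarrow> complex" where
  "cint g f = integral {0..1} (\<lambda>x. f (g x) * vector_derivative g (at x within {0..1}))"

definition wn :: "(real \<Rightarrow> complex) \<Rightarrow> complex \<Rightarrow> complex" where
  "wn g z = cint g (\<lambda>w. 1 / (w - z)) / (2 * pi * \<i>)"

definition qpoch :: "complex \<Rightarrow> real \<Rightarrow> complex" where
  "qpoch x q = (\<Prod>k. 1 - x * of_real q ^ k)"

definition tau :: "real \<Rightarrow> real \<Rightarrow> int \<Rightarrow> real" where
  "tau b c n = (if n \<ge> 0 then b powi n else c powi n)"

text \<open>phi_l(n); a, al are indexed 1..N.\<close>
definition phi :: "real \<Rightarrow> nat \<Rightarrow> real \<Rightarrow> (nat \<Rightarrow> real) \<Rightarrow> (nat \<Rightarrow> real) \<Rightarrow> real \<Rightarrow> real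
    \<Rightarrow> (real \<Rightarrow> complex) \<Rightarrow> nat \<Rightarrow> int \<Rightarrow> complex" where
  "phi q N t a al b c D l n =
     of_real (tau b c n) * (cint D (\<lambda>v.
        exp (- v * of_real t) / v powi (n + int N) * (1 / (v - of_real (a (l+1))))
        * (\<Prod>j=1..l. (v - of_real (al j)) / (v - of_real (a j)))
        * (\<Prod>k=1..N. qpoch (of_real q * of_real (al k) / v) q / qpoch (of_real q * v / of_real (a k)) q))
      / (2 * pi * \<i>))"

definition psi :: "real \<Rightarrow> nat \<Rightarrow> real \<Rightarrow> (nat \<Rightarrow> real) \<Rightarrow> (nat \<Rightarrow> real) \<Rightarrow> real \<Rightarrow> real
    \<Rightarrow> (real \<Rightarrow> complex) \<Rightarrow> nat \<Rightarrow> int \<Rightarrow> complex" where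
  "psi q N t a al b c C l n =
     of_real ((a (l+1) - al (l+1)) / tau b c n) * (cint C (\<lambda>z.
        (1 / z) * exp (z * of_real t) * z powi (n + int N) / (z - of_real (al (l+1)))
        * (\<Prod>j=1..l. (z - of_real (a j)) / (z - of_real (al j)))
        * (\<Prod>k=1..N. qpoch (of_real q * z / of_real (a k)) q / qpoch (of_real q * of_real (al k) / z) q))
      / (2 * pi * \<i>))"

end

theory Submission
  imports Defs "HOL-Complex_Analysis.Complex_Analysis"
begin

lemma cint_eq: "cint g f = contour_integral g f"
  by (simp add: cint_def contour_integral_def integral_def has_contour_integral_def contour_integrable_on_def integrable_on_def)

lemma wn_eq: assumes "valid_path g" "z \<notin> path_image g" shows "wn g z = winding_number g z"
  using winding_number_valid_path[OF assms] by (simp add: wn_def cint_eq)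

lemma qpoch_wp:
  fixes q :: real assumes q: "0<q" "q<1"
  shows "weierstrass_product (\<lambda>n. 1 / of_real q ^ n) (\<lambda>_. 0)"
proof
  fix n show "1 / complex_of_real q ^ n \<noteq> 0" using q by simp
next
  have "LIM n sequentially. (1 / complex_of_real q) ^ n :> at_infinity"
    using q by (intro filterlim_realpow_sequentially_gt1) (auto simp: norm_divide)
  then show "filterlim (\<lambda>n. 1 / complex_of_real q ^ n) at_infinity at_top"
    by (simp add: power_one_over)
next
  fix r :: real assume "r>0"
  have "summable (\<lambda>n. r * q ^ n)" using q by (intro summable_mult summable_geometric) auto
  then show "summable (\<lambda>n. (r / norm (1 / complex_of_real q ^ n)) ^ Suc 0)"
    using q by (simp add: norm_divide norm_power)
qed

lemma qpoch_eq_f: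
  fixes q :: real assumes q: "0<q" "q<1"
  shows "qpoch z q = weierstrass_product.f (\<lambda>n. 1 / of_real q ^ n) (\<lambda>_. 0) z"
  unfolding weierstrass_product.f_def[OF qpoch_wp[OF q]] qpoch_def
  by (simp add: weierstrass_factor_def)

lemma qpoch_holo [holomorphic_intros]:
  fixes q :: real assumes q: "0<q" "q<1" and f: "f holomorphic_on A"
  shows "(\<lambda>z. qpoch (f z) q) holomorphic_on A"
proof -
  have "(\<lambda>z. qpoch z q) holomorphic_on UNIV"
    using weierstrass_product.holomorphic[OF qpoch_wp[OF q]] qpoch_eq_f[OF q] by presburger
  then show ?thesis using holomorphic_on_compose_gen[OF f, of "\<lambda>z. qpoch z q" UNIV] by (auto simp: o_def)
qed

lemma qpoch_zero:
  fixes q :: real assumes q: "0<q" "q<1"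
  shows "qpoch z q = 0 \<longleftrightarrow> (\<exists>n. z = 1 / of_real q ^ n)"
  using weierstrass_product.zero[OF qpoch_wp[OF q]] qpoch_eq_f[OF q] by auto


lemma homologous_join:
  fixes S :: "complex set"
  assumes S: "open S" "connected S"
    and g1: "valid_path g1" "pathfinish g1 = pathstart g1" "path_image g1 \<subseteq> S"
    and g2: "valid_path g2" "pathfinish g2 = pathstart g2" "path_image g2 \<subseteq> S"
  obtains g where "valid_path g" "pathfinish g = pathstart g" "path_image g \<subseteq> S"
    "\<And>w. w \<notin> S \<Longrightarrow> winding_number g w = winding_number g1 w - winding_number g2 w"
    "\<And>f. f holomorphic_on S \<Longrightarrow> contour_integral g f = contour_integral g1 f - contour_integral g2 f"
proof -
  have "pathstart g1 \<in> S" "pathstart g2 \<in> S"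
    using g1 g2 pathstart_in_path_image by blast+
  then obtain p where p: "polynomial_function p" "path_image p \<subseteq> S"
    "pathstart p = pathstart g1" "pathfinish p = pathstart g2"
    using connected_open_polynomial_connected[OF S] by metis
  have vp: "valid_path p" using p(1) valid_path_polynomial_function by blast
  define g where "g = g1 +++ (p +++ (reversepath g2 +++ reversepath p))"
  have vg: "valid_path g" unfolding g_def
    using g1 g2 vp p by (intro valid_path_join) (auto simp: valid_path_reversepath)
  moreover have "pathfinish g = pathstart g" unfolding g_def using p by simp
  moreover have img: "path_image g \<subseteq> S" unfolding g_def using g1 g2 p
    by (intro subset_path_image_join) (auto simp: path_image_reversepath)
  moreover have "winding_number g w = winding_number g1 w - winding_number g2 w" if w: "w \<notin> S" for w
  proof -
    have nw: "w \<notin> path_image g1" "w \<notin> path_image g2" "w \<notin> path_image p"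
      using w g1 g2 p by auto
    have pp: "path g1" "path g2" "path p" using g1 g2 vp valid_path_imp_path by auto
    have "winding_number g w = winding_number g1 w + (winding_number p w + (winding_number (reversepath g2) w + winding_number (reversepath p) w))"
      unfolding g_def using nw pp p g1 g2
      by (simp add: winding_number_join not_in_path_image_join path_image_reversepath)
    then show ?thesis using nw pp by (simp add: winding_number_reversepath)
  qed
  moreover have "contour_integral g f = contour_integral g1 f - contour_integral g2 f"
    if f: "f holomorphic_on S" for f
  proof -
    have ci: "f contour_integrable_on h" if "valid_path h" "path_image h \<subseteq> S" for h
      using contour_integrable_holomorphic_simple[OF f S(1) that] .
    have i: "f contour_integrable_on g1" "f contour_integrable_on g2" "f contour_integrable_on p"
      "f contour_integrable_on reversepath g2" "f contour_integrable_on reversepath p"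
      using ci g1 g2 vp p by (auto simp: valid_path_reversepath path_image_reversepath)
    have "contour_integral g f = contour_integral g1 f + (contour_integral p f + (contour_integral (reversepath g2) f + contour_integral (reversepath p) f))"
      unfolding g_def using i g1 g2 vp p
      by (simp add: contour_integrable_joinI valid_path_join valid_path_reversepath)
    then show ?thesis using g2 vp by (simp add: contour_integral_reversepath)
  qed
  ultimately show ?thesis using that by blast
qed

lemma homologous_cauchy:
  fixes S :: "complex set"
  assumes S: "open S" "connected S" and f: "f holomorphic_on S"
    and g1: "valid_path g1" "pathfinish g1 = pathstart g1" "path_image g1 \<subseteq> S"
    and g2: "valid_path g2" "pathfinish g2 = pathstart g2" "path_image g2 \<subseteq> S"
    and w: "\<And>w. w \<notin> S \<Longrightarrow> winding_number g1 w = winding_number g2 w"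
  shows "contour_integral g1 f = contour_integral g2 f"
proof -
  obtain g where g: "valid_path g" "pathfinish g = pathstart g" "path_image g \<subseteq> S"
    "\<And>w. w \<notin> S \<Longrightarrow> winding_number g w = winding_number g1 w - winding_number g2 w"
    "\<And>f. f holomorphic_on S \<Longrightarrow> contour_integral g f = contour_integral g1 f - contour_integral g2 f"
    using homologous_join[OF S g1 g2] by blast
  have "(f has_contour_integral 0) g"
    using g w by (intro Cauchy_theorem_global[OF S(1) f]) auto
  then show ?thesis using g(5)[OF f] contour_integral_unique by fastforce
qed

lemma homologous_cauchy_formula:
  fixes S :: "complex set"
  assumes S: "open S" "connected S" and f: "f holomorphic_on S" and z: "z \<in> S"
    and g1: "valid_path g1" "pathfinish g1 = pathstart g1" "path_image g1 \<subseteq> S - {z}"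
    and g2: "valid_path g2" "pathfinish g2 = pathstart g2" "path_image g2 \<subseteq> S - {z}"
    and w: "\<And>w. w \<notin> S \<Longrightarrow> winding_number g1 w = winding_number g2 w"
  shows "contour_integral g1 (\<lambda>w. f w / (w - z)) - contour_integral g2 (\<lambda>w. f w / (w - z))
     = 2 * pi * \<i> * (winding_number g1 z - winding_number g2 z) * f z"
proof -
  have S': "open (S - {z})" "connected (S - {z})"
    using S by (auto intro: connected_open_delete)
  obtain g where g: "valid_path g" "pathfinish g = pathstart g" "path_image g \<subseteq> S - {z}"
    "\<And>w. w \<notin> S - {z} \<Longrightarrow> winding_number g w = winding_number g1 w - winding_number g2 w"
    "\<And>f. f holomorphic_on S - {z} \<Longrightarrow> contour_integral g f = contour_integral g1 f - contour_integral g2 f"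
    using homologous_join[OF S' g1 g2] by blast
  have hol: "(\<lambda>w. f w / (w - z)) holomorphic_on S - {z}"
    by (intro holomorphic_intros holomorphic_on_subset[OF f]) auto
  have "((\<lambda>w. f w / (w-z)) has_contour_integral (2*pi * \<i> * winding_number g z * f z)) g"
    using g w by (intro Cauchy_integral_formula_global[OF S(1) f z]) auto
  then show ?thesis using g(5)[OF hol] g(4)[of z] contour_integral_unique by fastforce
qed


lemma circle_integral_sums:
  fixes f :: "nat \<Rightarrow> complex \<Rightarrow> complex"
  assumes r: "0 < r" and cont: "\<And>k. continuous_on (sphere z r) (f k)"
    and bnd: "\<And>k w. w \<in> sphere z r \<Longrightarrow> norm (f k w) \<le> M k" and M: "summable M"
    and F: "\<And>w. w \<in> sphere z r \<Longrightarrow> (\<lambda>k. f k w) sums F w"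
  shows "(\<lambda>k. contour_integral (circlepath z r) (f k)) sums contour_integral (circlepath z r) F"
    "F contour_integrable_on circlepath z r"
proof -
  have ul: "uniform_limit (sphere z r) (\<lambda>n x. \<Sum>i<n. f i x) (\<lambda>x. suminf (\<lambda>i. f i x)) sequentially"
    by (rule Weierstrass_m_test[OF bnd M])
  have ul': "uniform_limit (sphere z r) (\<lambda>n x. \<Sum>i<n. f i x) F sequentially"
    using ul by (rule uniform_limit_cong[THEN iffD1, rotated 2]) (use F in \<open>auto simp: sums_iff\<close>)
  have ci: "f k contour_integrable_on circlepath z r" for k
    using cont r by (intro contour_integrable_continuous_circlepath) auto
  have ci': "\<forall>\<^sub>F n in sequentially. (\<lambda>x. \<Sum>i<n. f i x) contour_integrable_on (circlepath z r)"
    using ci by (intro always_eventually allI contour_integrable_sum) auto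
  note lim = contour_integral_uniform_limit_circlepath[OF ci' ul' _ r]
  show "F contour_integrable_on circlepath z r" using lim by auto
  have "(\<lambda>n. contour_integral (circlepath z r) (\<lambda>x. \<Sum>i<n. f i x)) = (\<lambda>n. \<Sum>i<n. contour_integral (circlepath z r) (f i))"
    using ci by (intro ext contour_integral_sum) auto
  with lim show "(\<lambda>k. contour_integral (circlepath z r) (f k)) sums contour_integral (circlepath z r) F"
    unfolding sums_def by auto
qed

lemma sphere_bound:
  fixes f :: "complex \<Rightarrow> complex"
  assumes "continuous_on (sphere z r) f"
  obtains M where "M > 0" "\<And>w. w \<in> sphere z r \<Longrightarrow> norm (f w) \<le> M"
proof -
  have "compact (f ` sphere z r)" using assms compact_sphere compact_continuous_image by blast
  then have "bounded (f ` sphere z r)" by (rule compact_imp_bounded)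
  then obtain M where "M > 0" "\<And>x. x \<in> f ` sphere z r \<Longrightarrow> norm x \<le> M" by (auto simp: bounded_pos)
  then show ?thesis using that by auto
qed

lemma closed_discrete_far:
  fixes X :: "complex set"
  assumes "\<And>M. finite {x \<in> X. norm x \<le> M}"
  shows "closed X"
proof -
  have "x \<in> X" if lim: "x islimpt X" for x
  proof (rule ccontr)
    assume "x \<notin> X"
    have fin: "finite {y \<in> X. norm y \<le> norm x + 1}" by (rule assms)
    have "x islimpt {y \<in> X. norm y \<le> norm x + 1}"
      unfolding islimpt_approachable
    proof (intro allI impI)
      fix e :: real assume e: "e > 0"
      obtain y where y: "y \<in> X" "y \<noteq> x" "dist y x < min e 1"
        using lim e unfolding islimpt_approachable by (meson less_numeral_extra(1) min_less_iff_conj)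
      have "norm y \<le> norm x + 1" using y(3) norm_triangle_ineq2[of y x] by (simp add: dist_norm)
      then show "\<exists>y'\<in>{y \<in> X. norm y \<le> norm x + 1}. y' \<noteq> x \<and> dist y' x < e" using y by auto
    qed
    then show False using islimpt_finite[OF fin] by blast
  qed
  then show ?thesis by (simp add: closed_limpt)
qed

lemma closed_discrete_zero:
  fixes X :: "complex set"
  assumes "0 \<in> X" "\<And>d. d > 0 \<Longrightarrow> finite {x \<in> X. d \<le> norm x}"
  shows "closed X"
proof -
  have "x \<in> X" if lim: "x islimpt X" for x
  proof (rule ccontr)
    assume "x \<notin> X"
    then have x0: "x \<noteq> 0" using assms by auto
    have fin: "finite {y \<in> X. norm x / 2 \<le> norm y}" using x0 by (intro assms) auto
    have "x islimpt {y \<in> X. norm x / 2 \<le> norm y}"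
      unfolding islimpt_approachable
    proof (intro allI impI)
      fix e :: real assume e: "e > 0"
      have "min e (norm x / 2) > 0" using e x0 by auto
      then obtain y where y: "y \<in> X" "y \<noteq> x" "dist y x < min e (norm x / 2)"
        using lim unfolding islimpt_approachable by blast
      have "norm x / 2 \<le> norm y" using y(3) norm_triangle_ineq2[of x y] by (simp add: dist_norm norm_minus_commute)
      then show "\<exists>y'\<in>{y \<in> X. norm x / 2 \<le> norm y}. y' \<noteq> x \<and> dist y' x < e" using y by auto
    qed
    then show False using islimpt_finite[OF fin] by blast
  qed
  then show ?thesis by (simp add: closed_limpt)
qed

lemma circle_integral_bound:
  assumes "0 < r" "continuous_on (sphere z r) f" "0 \<le> B" "\<And>w. w \<in> sphere z r \<Longrightarrow> norm (f w) \<le> B"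
  shows "norm (contour_integral (circlepath z r) f) \<le> B * (2 * pi * r)"
proof -
  have "f contour_integrable_on circlepath z r"
    using assms by (intro contour_integrable_continuous_circlepath) auto
  then have "(f has_contour_integral contour_integral (circlepath z r) f) (circlepath z r)"
    by (rule has_contour_integral_integral)
  then show ?thesis using assms
    by (intro has_contour_integral_bound_circlepath) (auto simp: dist_norm norm_minus_commute)
qed

lemma has_sum_int_split:
  fixes u :: "int \<Rightarrow> complex"
  assumes "summable (\<lambda>k. norm (u (int k)))" "(\<lambda>k. u (int k)) sums X"
    "summable (\<lambda>k. norm (u (- int (Suc k))))" "(\<lambda>k. u (- int (Suc k))) sums Y"
  shows "(u has_sum (X + Y)) UNIV"
proof -
  have 1: "((\<lambda>k. u (int k)) has_sum X) UNIV" using assms by (intro norm_summable_imp_has_sum)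
  have 2: "((\<lambda>k. u (- int (Suc k))) has_sum Y) UNIV" using assms by (intro norm_summable_imp_has_sum)
  have inj1: "inj_on int UNIV" by (auto simp: inj_on_def)
  have inj2: "inj_on (\<lambda>k. - int (Suc k)) UNIV" by (auto simp: inj_on_def)
  have a: "(u has_sum X) (range int)" using 1 has_sum_reindex[OF inj1, of u X] by (simp add: o_def)
  have b: "(u has_sum Y) (range (\<lambda>k. - int (Suc k)))" using 2 has_sum_reindex[OF inj2, of u Y] by (simp add: o_def)
  have c: "range int \<inter> range (\<lambda>k. - int (Suc k)) = {}" by auto
  have d: "range int \<union> range (\<lambda>k. - int (Suc k)) = UNIV"
  proof -
    have "n \<in> range int \<union> range (\<lambda>k. - int (Suc k))" for n :: int
    proof (cases "n \<ge> 0")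
      case True then have "n = int (nat n)" by simp
      then show ?thesis by blast
    next
      case False then have "n = - int (Suc (nat (- n - 1)))" by simp
      then show ?thesis by blast
    qed
    then show ?thesis by blast
  qed
  show ?thesis using has_sum_Un_disjoint[OF a b c] d by simp
qed


lemma has_sum_finite_sum:
  fixes f :: "'a \<Rightarrow> 'b \<Rightarrow> complex"
  assumes "finite A" "\<And>p. p \<in> A \<Longrightarrow> (f p has_sum s p) S"
  shows "((\<lambda>n. \<Sum>p\<in>A. f p n) has_sum (\<Sum>p\<in>A. s p)) S"
  using assms
proof (induction A rule: finite_induct)
  case empty then show ?case by simp
next
  case (insert x F)
  then have "((\<lambda>n. f x n + (\<Sum>p\<in>F. f p n)) has_sum (s x + (\<Sum>p\<in>F. s p))) S"
    by (intro has_sum_add) auto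
  then show ?case using insert by simp
qed

locale biortho =
  fixes q t b c :: real and N :: nat and a al :: "nat \<Rightarrow> real"
    and D C :: "real \<Rightarrow> complex" and l m :: nat
  assumes q: "0 < q" "q < 1" and N: "N \<ge> 1" and t: "t > 0"
    and aal: "\<And>i j. i \<in> {1..N} \<Longrightarrow> j \<in> {1..N} \<Longrightarrow> 0 \<le> al i \<and> al i < a j \<and> a j \<le> 1"
    and b: "\<And>i. i \<in> {1..N} \<Longrightarrow> al i < b" "\<And>i. i \<in> {1..N} \<Longrightarrow> b < a i"
    and c: "1 < c"
    and D: "valid_path D" "simple_path D" "pathfinish D = pathstart D"
      "\<And>i. i \<in> {1..N} \<Longrightarrow> of_real (a i) \<notin> path_image D \<and> wn D (of_real (a i)) = 1"
      "0 \<notin> path_image D" "wn D 0 = 0"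
      "\<And>k j. k \<in> {1..N} \<Longrightarrow> j \<ge> 1 \<Longrightarrow>
         of_real (a k / q ^ j) \<notin> path_image D \<and> wn D (of_real (a k / q ^ j)) = 0"
    and C: "valid_path C" "simple_path C" "pathfinish C = pathstart C"
      "0 \<notin> path_image C" "wn C 0 = 1"
      "\<And>i j. i \<in> {1..N} \<Longrightarrow>
         of_real (al i * q ^ j) \<notin> path_image C \<and> wn C (of_real (al i * q ^ j)) = 1"
    and lm: "l < N" "m < N"
begin

definition "A1 = Min (a ` {1..N})"
definition "rho = Max (al ` {1..N})"
definition "AS = (\<lambda>k. complex_of_real (a k)) ` {1..N}"
definition "SD = insert 0 ((\<lambda>(k,j). complex_of_real (a k / q ^ j)) ` ({1..N} \<times> {1..}))"
definition "SC = insert 0 ((\<lambda>(k,j). complex_of_real (al k * q ^ j)) ` ({1..N} \<times> UNIV))"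

lemma N_ne: "{1..N} \<noteq> {}" using N by auto

lemma A1_le: "k \<in> {1..N} \<Longrightarrow> A1 \<le> a k"
  unfolding A1_def by (intro Min_le) auto

lemma A1_mem: "\<exists>k\<in>{1..N}. A1 = a k"
proof -
  have "Min (a ` {1..N}) \<in> a ` {1..N}" by (rule Min_in) (use N_ne in auto)
  then show ?thesis unfolding A1_def by auto
qed

lemma rho_ge: "k \<in> {1..N} \<Longrightarrow> al k \<le> rho"
  unfolding rho_def by (intro Max_ge) auto

lemma rho_mem: "\<exists>k\<in>{1..N}. rho = al k"
proof -
  have "Max (al ` {1..N}) \<in> al ` {1..N}" by (rule Max_in) (use N_ne in auto)
  then show ?thesis unfolding rho_def by auto
qed

lemma rho_A1: "0 \<le> rho" "rho < A1" "A1 \<le> 1" "0 < A1"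
proof -
  obtain i where i: "i \<in> {1..N}" "rho = al i" using rho_mem by blast
  obtain j where j: "j \<in> {1..N}" "A1 = a j" using A1_mem by blast
  show "0 \<le> rho" "rho < A1" "A1 \<le> 1" using aal[OF i(1) j(1)] i j by auto
  then show "0 < A1" by linarith
qed

lemma a_pos: "k \<in> {1..N} \<Longrightarrow> 0 < a k" "k \<in> {1..N} \<Longrightarrow> a k \<le> 1"
  using A1_le rho_A1 aal[of 1 k] N by force+

lemma al_bnd: "k \<in> {1..N} \<Longrightarrow> 0 \<le> al k" "k \<in> {1..N} \<Longrightarrow> al k \<le> rho"
  using aal[of k 1] N rho_ge by auto

lemma closed_SD: "closed SD"
proof (rule closed_discrete_far)
  fix M :: real
  obtain J where J: "max M 0 / A1 < (1/q) ^ J" using real_arch_pow[of "1/q"] q by auto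
  have "{x \<in> SD. norm x \<le> M} \<subseteq> insert 0 ((\<lambda>(k,j). complex_of_real (a k / q ^ j)) ` ({1..N} \<times> {1..J}))"
  proof
    fix x assume x: "x \<in> {x \<in> SD. norm x \<le> M}"
    show "x \<in> insert 0 ((\<lambda>(k,j). complex_of_real (a k / q ^ j)) ` ({1..N} \<times> {1..J}))"
    proof (cases "x = 0")
      case False
      then obtain k j where kj: "k \<in> {1..N}" "j \<ge> 1" "x = complex_of_real (a k / q ^ j)"
        using x unfolding SD_def by auto
      have "j \<le> J"
      proof (rule ccontr)
        assume "\<not> j \<le> J"
        then have "(1/q) ^ J \<le> (1/q) ^ j" using q by (intro power_increasing) auto
        then have "max M 0 / A1 < (1/q) ^ j" using J by linarith
        then have "max M 0 < A1 * (1/q) ^ j" using rho_A1 by (simp add: field_simps)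
        also have "\<dots> \<le> a k * (1/q) ^ j" using A1_le[OF kj(1)] q by (intro mult_right_mono) auto
        also have "\<dots> = norm x" using kj a_pos[OF kj(1)] q by (simp add: norm_divide norm_power power_one_over)
        finally show False using x by auto
      qed
      then show ?thesis using kj by auto
    qed auto
  qed
  then show "finite {x \<in> SD. norm x \<le> M}" by (rule finite_subset) auto
qed

lemma closed_SC: "closed SC"
proof (rule closed_discrete_zero)
  show "0 \<in> SC" unfolding SC_def by auto
  fix d :: real assume d: "d > 0"
  obtain J where J: "q ^ J < d" using real_arch_pow_inv[OF d q(2)] by auto
  have "{x \<in> SC. d \<le> norm x} \<subseteq> insert 0 ((\<lambda>(k,j). complex_of_real (al k * q ^ j)) ` ({1..N} \<times> {..<J}))"
  proof
    fix x assume x: "x \<in> {x \<in> SC. d \<le> norm x}"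
    show "x \<in> insert 0 ((\<lambda>(k,j). complex_of_real (al k * q ^ j)) ` ({1..N} \<times> {..<J}))"
    proof (cases "x = 0")
      case False
      then obtain k j where kj: "k \<in> {1..N}" "x = complex_of_real (al k * q ^ j)"
        using x unfolding SC_def by auto
      have "j < J"
      proof (rule ccontr)
        assume "\<not> j < J"
        then have "q ^ j \<le> q ^ J" using q by (intro power_decreasing) auto
        have "norm x = al k * q ^ j" using kj al_bnd[OF kj(1)] q by (simp add: norm_mult norm_power)
        also have "\<dots> \<le> 1 * q ^ j" using aal[OF kj(1) kj(1)] q by (intro mult_right_mono) auto
        also have "\<dots> < d" using J \<open>q ^ j \<le> q ^ J\<close> by simp
        finally show False using x by auto
      qed
      then show ?thesis using kj by auto
    qed auto
  qed
  then show "finite {x \<in> SC. d \<le> norm x}" by (rule finite_subset) auto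
qed

lemma countable_SD: "countable SD"
  unfolding SD_def by (intro countable_insert countable_image countable_SIGMA) auto

lemma countable_SC: "countable SC"
  unfolding SC_def by (intro countable_insert countable_image countable_SIGMA) auto

lemma open_conn_SD: "open (- SD)" "connected (- SD)"
  using closed_SD connected_open_diff_countable[of UNIV SD] countable_SD
  by (auto simp: Compl_eq_Diff_UNIV open_Diff)

lemma open_conn_SC: "open (- SC)" "connected (- SC)"
  using closed_SC connected_open_diff_countable[of UNIV SC] countable_SC
  by (auto simp: Compl_eq_Diff_UNIV open_Diff)

definition "fD n = (\<lambda>v. exp (- v * of_real t) / v powi (n + int N) * (1 / (v - of_real (a (l+1))))
        * (\<Prod>j=1..l. (v - of_real (al j)) / (v - of_real (a j)))
        * (\<Prod>k=1..N. qpoch (of_real q * of_real (al k) / v) q / qpoch (of_real q * v / of_real (a k)) q))"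
definition "gC n = (\<lambda>z. (1 / z) * exp (z * of_real t) * z powi (n + int N) / (z - of_real (al (m+1)))
        * (\<Prod>j=1..m. (z - of_real (a j)) / (z - of_real (al j)))
        * (\<Prod>k=1..N. qpoch (of_real q * z / of_real (a k)) q / qpoch (of_real q * of_real (al k) / z) q))"

lemma phi_eq: "phi q N t a al b c D l n = of_real (tau b c n) * (contour_integral D (fD n) / (2*pi*\<i>))"
  by (simp add: phi_def fD_def cint_eq)

lemma psi_eq: "psi q N t a al b c C m n = of_real ((a (m+1) - al (m+1)) / tau b c n) * (contour_integral C (gC n) / (2*pi*\<i>))"
  by (simp add: psi_def gC_def cint_eq)

lemma SC_mem: "k \<in> {1..N} \<Longrightarrow> complex_of_real (al k * q ^ j) \<in> SC"
  unfolding SC_def by (rule insertI2, rule image_eqI[where x="(k,j)"]) auto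
lemma SD_mem: "k \<in> {1..N} \<Longrightarrow> j \<ge> 1 \<Longrightarrow> complex_of_real (a k / q ^ j) \<in> SD"
  unfolding SD_def by (rule insertI2, rule image_eqI[where x="(k,j)"]) auto

lemma notSD: "v \<notin> SD \<Longrightarrow> v \<noteq> 0" unfolding SD_def by auto
lemma notSC: "z \<notin> SC \<Longrightarrow> z \<noteq> 0" unfolding SC_def by auto
lemma notSC_al: "z \<notin> SC \<Longrightarrow> k \<in> {1..N} \<Longrightarrow> z \<noteq> of_real (al k)"
  using SC_mem[of k 0] by auto
lemma notAS: "v \<notin> AS \<Longrightarrow> k \<in> {1..N} \<Longrightarrow> v \<noteq> of_real (a k)"
  unfolding AS_def by auto

lemma QD_nz:
  assumes v: "v \<notin> SD" and k: "k \<in> {1..N}"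
  shows "qpoch (of_real q * v / of_real (a k)) q \<noteq> 0"
proof
  assume "qpoch (of_real q * v / of_real (a k)) q = 0"
  then obtain n where n: "of_real q * v / of_real (a k) = 1 / of_real q ^ n" using qpoch_zero[OF q] by auto
  have ak: "a k \<noteq> 0" using a_pos[OF k] by auto
  have "v = of_real (a k / q ^ Suc n)" using n q ak by (simp add: field_simps)
  then have "v \<in> SD" using SD_mem[OF k, of "Suc n"] by simp
  then show False using v by auto
qed

lemma QC_nz:
  assumes z: "z \<notin> SC" and k: "k \<in> {1..N}"
  shows "qpoch (of_real q * of_real (al k) / z) q \<noteq> 0"
proof
  assume "qpoch (of_real q * of_real (al k) / z) q = 0"
  then obtain n where n: "of_real q * of_real (al k) / z = 1 / of_real q ^ n" using qpoch_zero[OF q] by auto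
  have "z \<noteq> 0" using notSC[OF z] .
  then have "z = of_real (al k * q ^ Suc n)" using n q by (simp add: field_simps)
  then have "z \<in> SC" using SC_mem[OF k, of "Suc n"] by simp
  then show False using z by auto
qed

lemma hol_fD: "fD n holomorphic_on (- SD - AS)"
  unfolding fD_def using lm
  by (intro holomorphic_intros qpoch_holo[OF q]) (auto simp: notSD notAS QD_nz)

lemma hol_gC: "gC n holomorphic_on (- SC)"
  unfolding gC_def using lm
  by (intro holomorphic_intros qpoch_holo[OF q]) (auto simp: notSC notSC_al QC_nz)

lemma AS_notSD: "p \<in> AS \<Longrightarrow> p \<notin> SD"
proof
  assume p: "p \<in> AS" "p \<in> SD"
  then obtain i where i: "i \<in> {1..N}" "p = of_real (a i)" unfolding AS_def by auto
  have "p \<noteq> 0" using i a_pos(1)[OF i(1)] by auto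
  then obtain k j where kj: "k \<in> {1..N}" "j \<ge> 1" "p = of_real (a k / q ^ j)" using p(2) unfolding SD_def by auto
  show False using D(4)[OF i(1)] D(7)[OF kj(1,2)] i kj by simp
qed

lemma finite_AS: "finite AS" unfolding AS_def by auto

definition "dl = A1 - rho"
lemma dl_pos: "dl > 0" using rho_A1 unfolding dl_def by auto

lemma eps_ex: "\<exists>e>0. e \<le> 1 \<and> e \<le> dl/4 \<and> (\<forall>p\<in>AS. \<forall>x\<in>SD \<union> AS. x \<noteq> p \<longrightarrow> e < norm (x - p))"
proof -
  have "\<exists>e>0. \<forall>x\<in>SD \<union> AS. x \<noteq> p \<longrightarrow> e \<le> norm (x - p)" if p: "p \<in> AS" for p
  proof -
    have "closed (SD \<union> (AS - {p}))" using finite_AS by (intro closed_Un[OF closed_SD] finite_imp_closed) auto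
    then have op1: "open (- (SD \<union> (AS - {p})))" by (rule open_Compl)
    have op2: "p \<in> - (SD \<union> (AS - {p}))" using AS_notSD[OF p] by auto
    note op = op1 op2
    obtain e where e: "e > 0" "ball p e \<subseteq> - (SD \<union> (AS - {p}))"
      using openE[OF op] by blast
    have "e \<le> norm (x - p)" if "x \<in> SD \<union> AS" "x \<noteq> p" for x
    proof (rule ccontr)
      assume "\<not> e \<le> norm (x - p)"
      then have "x \<in> ball p e" by (simp add: dist_norm norm_minus_commute)
      then show False using e that by auto
    qed
    then show ?thesis using e by auto
  qed
  then obtain E where E: "\<And>p. p \<in> AS \<Longrightarrow> E p > 0 \<and> (\<forall>x\<in>SD \<union> AS. x \<noteq> p \<longrightarrow> E p \<le> norm (x - p))"
    by metis
  define e where "e = Min (insert (min 1 (dl/4)) ((\<lambda>p. E p / 2) ` AS))"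
  have fin: "finite (insert (min 1 (dl/4)) ((\<lambda>p. E p / 2) ` AS))" using finite_AS by auto
  have "e > 0" unfolding e_def using fin dl_pos E by (subst Min_gr_iff) auto
  moreover have "e \<le> min 1 (dl/4)" unfolding e_def using fin by (intro Min_le) auto
  then have "e \<le> 1" "e \<le> dl/4" by auto
  moreover have "e < norm (x - p)" if "p \<in> AS" "x \<in> SD \<union> AS" "x \<noteq> p" for p x
  proof -
    have "e \<le> E p / 2" unfolding e_def using fin that by (intro Min_le) auto
    also have "\<dots> < E p" using E[OF that(1)] by auto
    also have "\<dots> \<le> norm (x - p)" using E[OF that(1)] that by auto
    finally show ?thesis .
  qed
  ultimately show ?thesis by blast
qed

definition "eps = (SOME e. e>0 \<and> e \<le> 1 \<and> e \<le> dl/4 \<and> (\<forall>p\<in>AS. \<forall>x\<in>SD \<union> AS. x \<noteq> p \<longrightarrow> e < norm (x - p)))"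

lemma eps: "eps > 0" "eps \<le> 1" "eps \<le> dl/4" "\<And>p x. p \<in> AS \<Longrightarrow> x \<in> SD \<union> AS \<Longrightarrow> x \<noteq> p \<Longrightarrow> eps < norm (x - p)"
  using someI_ex[OF eps_ex] unfolding eps_def[symmetric] by auto

lemma AS_norm: assumes "p \<in> AS" shows "A1 \<le> norm p" "norm p \<le> 1"
proof -
  obtain k where k: "k \<in> {1..N}" "p = of_real (a k)" using assms unfolding AS_def by auto
  show "A1 \<le> norm p" "norm p \<le> 1" using A1_le[OF k(1)] a_pos[OF k(1)] k by auto
qed

lemma SC_norm: assumes "x \<in> SC" shows "norm x \<le> rho"
proof (cases "x = 0")
  case True then show ?thesis using rho_A1 by simp
next
  case False
  then obtain k j where kj: "k \<in> {1..N}" "x = of_real (al k * q ^ j)" using assms unfolding SC_def by auto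
  have "norm x = al k * q ^ j" using kj al_bnd[OF kj(1)] q by (simp add: norm_mult norm_power)
  also have "\<dots> \<le> al k * 1" using al_bnd[OF kj(1)] q by (intro mult_left_mono power_le_one) auto
  also have "\<dots> \<le> rho" using al_bnd[OF kj(1)] by simp
  finally show ?thesis .
qed

lemma cball_AS:
  assumes p: "p \<in> AS" and v: "v \<in> cball p eps"
  shows "v \<notin> SD" "v \<in> AS \<Longrightarrow> v = p" "rho + 3 * dl / 4 \<le> norm v" "norm v \<le> 2" "v \<notin> SC"
proof -
  have d: "norm (v - p) \<le> eps" using v by (simp add: dist_norm norm_minus_commute)
  show "v \<notin> SD"
  proof
    assume "v \<in> SD"
    moreover have "v \<noteq> p" using AS_notSD[OF p] \<open>v \<in> SD\<close> by auto
    ultimately show False using eps(4)[OF p, of v] d by auto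
  qed
  show "v = p" if "v \<in> AS" using eps(4)[OF p, of v] d that by force
  have "norm p - norm (v - p) \<le> norm v" using norm_triangle_ineq2[of p "p - v"] by (simp add: norm_minus_commute)
  then have "A1 - eps \<le> norm v" using AS_norm[OF p] d by linarith
  then show n1: "rho + 3 * dl / 4 \<le> norm v" using eps(3) unfolding dl_def by (simp add: field_simps)
  have "norm v \<le> norm p + norm (v - p)" using norm_triangle_ineq[of p "v - p"] by simp
  then show "norm v \<le> 2" using AS_norm[OF p] d eps(2) by linarith
  show "v \<notin> SC"
  proof
    assume "v \<in> SC"
    then have "norm v \<le> rho" by (rule SC_norm)
    then show False using n1 dl_pos by linarith
  qed
qed

lemma phi_res: "contour_integral D (fD n) = (\<Sum>p\<in>AS. contour_integral (circlepath p eps) (fD n))"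
proof -
  have img: "path_image D \<subseteq> - SD - AS"
  proof
    fix x assume x: "x \<in> path_image D"
    have "x \<notin> SD" using x D(5) D(7) unfolding SD_def by auto
    moreover have "x \<notin> AS" using x D(4) unfolding AS_def by auto
    ultimately show "x \<in> - SD - AS" by auto
  qed
  have homo: "\<forall>z. z \<notin> - SD \<longrightarrow> winding_number D z = 0"
  proof (intro allI impI)
    fix z assume "z \<notin> - SD"
    then have "z \<in> SD" by auto
    then have "z \<notin> path_image D \<and> wn D z = 0" unfolding SD_def using D(5,6,7) by auto
    then show "winding_number D z = 0" using wn_eq[OF D(1)] by auto
  qed
  have "contour_integral D (fD n) = 2 * pi * \<i> * (\<Sum>p\<in>AS. winding_number D p * residue (fD n) p)"
    by (rule Residue_theorem[OF open_conn_SD finite_AS hol_fD D(1) D(3) img homo])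
  also have "\<dots> = (\<Sum>p\<in>AS. contour_integral (circlepath p eps) (fD n))"
    unfolding sum_distrib_left
  proof (intro sum.cong refl)
    fix p assume p: "p \<in> AS"
    then obtain i where i: "i \<in> {1..N}" "p = of_real (a i)" unfolding AS_def by auto
    have w: "winding_number D p = 1" using D(4)[OF i(1)] wn_eq[OF D(1)] i by auto
    have "open (- SD - (AS - {p}))" using open_conn_SD finite_AS by (auto intro: open_Diff finite_imp_closed)
    moreover have "p \<in> - SD - (AS - {p})" using AS_notSD[OF p] by auto
    moreover have "fD n holomorphic_on (- SD - (AS - {p})) - {p}"
      using hol_fD by (rule holomorphic_on_subset) auto
    moreover have "cball p eps \<subseteq> - SD - (AS - {p})" using cball_AS[OF p] by auto
    ultimately have "(fD n has_contour_integral 2 * pi * \<i> * residue (fD n) p) (circlepath p eps)"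
      using eps(1) by (intro base_residue) auto
    then show "2 * pi * \<i> * (winding_number D p * residue (fD n) p) = contour_integral (circlepath p eps) (fD n)"
      using w contour_integral_unique by auto
  qed
  finally show ?thesis .
qed

lemma sphere_notSC: "rho < rr \<Longrightarrow> sphere 0 rr \<inter> SC = {}"
  using SC_norm by fastforce

lemma psi_circ:
  assumes rr: "rho < rr"
  shows "contour_integral C (gC n) = contour_integral (circlepath 0 rr) (gC n)"
proof -
  have rr0: "rr > 0" using rr rho_A1 by auto
  have imgC: "path_image C \<subseteq> - SC"
  proof
    fix x assume x: "x \<in> path_image C"
    show "x \<in> - SC" using x C(4) C(6) unfolding SC_def by auto
  qed
  have imgc: "path_image (circlepath 0 rr) \<subseteq> - SC" using sphere_notSC[OF rr] rr0 by auto
  show ?thesis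
  proof (rule homologous_cauchy[OF open_conn_SC hol_gC C(1) C(3) imgC _ _ imgc])
    fix w assume "w \<notin> - SC"
    then have w: "w \<in> SC" by auto
    then have "w \<notin> path_image C \<and> wn C w = 1" unfolding SC_def using C(4,5,6) by auto
    then have "winding_number C w = 1" using wn_eq[OF C(1)] by auto
    moreover have "winding_number (circlepath 0 rr) w = 1"
      using SC_norm[OF w] rr by (intro winding_number_circlepath) auto
    ultimately show "winding_number C w = winding_number (circlepath 0 rr) w" by simp
  qed auto
qed

definition "E = fD 0"
definition "H = gC 0"

lemma fD_E: "v \<noteq> 0 \<Longrightarrow> fD n v = E v / v powi n"
  unfolding E_def fD_def by (simp add: power_int_add field_simps)

lemma gC_H: "z \<noteq> 0 \<Longrightarrow> gC n z = H z * z powi n"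
  unfolding H_def gC_def by (simp add: power_int_add field_simps)

definition "r0 = rho + dl / 2"
definition "R0 = (3::real)"

lemma r0: "0 < r0" "rho < r0" "r0 < rho + 3 * dl / 4"
  using rho_A1 dl_pos unfolding r0_def by auto

lemma cont_H: "rho < rr \<Longrightarrow> continuous_on (sphere 0 rr) H"
  unfolding H_def using sphere_notSC
  by (intro holomorphic_on_imp_continuous_on holomorphic_on_subset[OF hol_gC]) auto

lemma inner_pos:
  assumes v: "r0 < norm v"
  shows "(\<lambda>k. contour_integral (circlepath 0 r0) (gC (int k)) / v ^ k) sums
           contour_integral (circlepath 0 r0) (\<lambda>z. H z * (v / (v - z)))"
proof -
  have v0: "v \<noteq> 0" using v r0 by auto
  obtain MH where MH: "MH > 0" "\<And>z. z \<in> sphere 0 r0 \<Longrightarrow> norm (H z) \<le> MH"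
    using sphere_bound[OF cont_H[OF r0(2)]] by blast
  have contk: "continuous_on (sphere 0 r0) (\<lambda>z. H z * (z / v) ^ k)" for k
    by (intro continuous_intros cont_H[OF r0(2)]) (use v0 in auto)
  have eq: "contour_integral (circlepath 0 r0) (gC (int k)) / v ^ k =
      contour_integral (circlepath 0 r0) (\<lambda>z. H z * (z / v) ^ k)" for k
  proof -
    have "contour_integral (circlepath 0 r0) (gC (int k)) = contour_integral (circlepath 0 r0) (\<lambda>z. H z * z ^ k)"
    proof (intro contour_integral_cong refl)
      fix z assume "z \<in> path_image (circlepath 0 r0)"
      then have z0: "z \<noteq> 0" using r0 by auto
      show "gC (int k) z = H z * z ^ k" by (simp add: gC_H[OF z0] power_int_of_nat)
    qed
    also have "\<dots> / v ^ k = contour_integral (circlepath 0 r0) (\<lambda>z. H z * z ^ k / v ^ k)"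
      by (rule contour_integral_div[symmetric], intro contour_integrable_continuous_circlepath)
         (use r0 in \<open>auto intro!: continuous_intros cont_H\<close>)
    also have "\<dots> = contour_integral (circlepath 0 r0) (\<lambda>z. H z * (z / v) ^ k)"
      by (simp add: power_divide)
    finally show ?thesis .
  qed
  have "(\<lambda>k. contour_integral (circlepath 0 r0) (\<lambda>z. H z * (z / v) ^ k)) sums
           contour_integral (circlepath 0 r0) (\<lambda>z. H z * (v / (v - z)))"
  proof (rule circle_integral_sums(1)[where M = "\<lambda>k. MH * (r0 / norm v) ^ k"])
    show "0 < r0" using r0 by simp
    show "continuous_on (sphere 0 r0) (\<lambda>z. H z * (z / v) ^ k)" for k by (rule contk)
    show "norm (H z * (z / v) ^ k) \<le> MH * (r0 / norm v) ^ k" if "z \<in> sphere 0 r0" for k z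
    proof -
      have "norm (H z * (z / v) ^ k) = norm (H z) * (r0 / norm v) ^ k"
        using that by (simp add: norm_mult norm_power norm_divide)
      also have "\<dots> \<le> MH * (r0 / norm v) ^ k" using MH that r0 by (intro mult_right_mono) auto
      finally show ?thesis .
    qed
    have th: "norm (r0 / norm v) < 1" using v r0 by (auto simp: divide_less_eq)
    show "summable (\<lambda>k. MH * (r0 / norm v) ^ k)"
      using th by (intro summable_mult summable_geometric) auto
    show "(\<lambda>k. H z * (z / v) ^ k) sums (H z * (v / (v - z)))" if z: "z \<in> sphere 0 r0" for z
    proof -
      have nz: "norm (z / v) < 1" using z v v0 by (auto simp: norm_divide)
      have "(\<lambda>k. (z / v) ^ k) sums (1 / (1 - z / v))" by (rule geometric_sums[OF nz])
      then have "(\<lambda>k. H z * (z / v) ^ k) sums (H z * (1 / (1 - z / v)))" by (rule sums_mult)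
      moreover have "v \<noteq> z" using z v by auto
      ultimately show ?thesis using v0 by (simp add: field_simps)
    qed
  qed
  then show ?thesis using eq by simp
qed

lemma inner_neg:
  assumes v: "norm v < R0"
  shows "(\<lambda>k. contour_integral (circlepath 0 R0) (gC (- int (Suc k))) * v ^ Suc k) sums
           contour_integral (circlepath 0 R0) (\<lambda>z. H z * (v / (z - v)))"
proof -
  have R0: "rho < R0" "0 < R0" using rho_A1 unfolding R0_def by auto
  obtain MH where MH: "MH > 0" "\<And>z. z \<in> sphere 0 R0 \<Longrightarrow> norm (H z) \<le> MH"
    using sphere_bound[OF cont_H[OF R0(1)]] by blast
  have contk: "continuous_on (sphere 0 R0) (\<lambda>z. H z * (v / z) ^ Suc k)" for k
    using R0 by (intro continuous_intros cont_H[OF R0(1)]) auto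
  have eq: "contour_integral (circlepath 0 R0) (gC (- int (Suc k))) * v ^ Suc k =
      contour_integral (circlepath 0 R0) (\<lambda>z. H z * (v / z) ^ Suc k)" for k
  proof -
    have "contour_integral (circlepath 0 R0) (gC (- int (Suc k))) = contour_integral (circlepath 0 R0) (\<lambda>z. H z / z ^ Suc k)"
    proof (intro contour_integral_cong refl)
      fix z assume "z \<in> path_image (circlepath 0 R0)"
      then have z0: "z \<noteq> 0" using R0 by auto
      show "gC (- int (Suc k)) z = H z / z ^ Suc k"
        by (simp only: gC_H[OF z0] power_int_minus power_int_of_nat) (simp add: divide_inverse)
    qed
    also have "\<dots> * v ^ Suc k = contour_integral (circlepath 0 R0) (\<lambda>z. H z / z ^ Suc k * v ^ Suc k)"
      by (rule contour_integral_rmul[symmetric], intro contour_integrable_continuous_circlepath)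
         (use R0 in \<open>auto intro!: continuous_intros cont_H\<close>)
    also have "\<dots> = contour_integral (circlepath 0 R0) (\<lambda>z. H z * (v / z) ^ Suc k)"
      by (simp add: power_divide)
    finally show ?thesis .
  qed
  have "(\<lambda>k. contour_integral (circlepath 0 R0) (\<lambda>z. H z * (v / z) ^ Suc k)) sums
           contour_integral (circlepath 0 R0) (\<lambda>z. H z * (v / (z - v)))"
  proof (rule circle_integral_sums(1)[where M = "\<lambda>k. MH * (norm v / R0) ^ Suc k"])
    show "0 < R0" using R0 by simp
    show "continuous_on (sphere 0 R0) (\<lambda>z. H z * (v / z) ^ Suc k)" for k by (rule contk)
    show "norm (H z * (v / z) ^ Suc k) \<le> MH * (norm v / R0) ^ Suc k" if "z \<in> sphere 0 R0" for k z
    proof -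
      have "norm (H z * (v / z) ^ Suc k) = norm (H z) * (norm v / R0) ^ Suc k"
        using that by (simp add: norm_mult norm_power norm_divide)
      also have "\<dots> \<le> MH * (norm v / R0) ^ Suc k" using MH that R0 by (intro mult_right_mono) auto
      finally show ?thesis .
    qed
    show "summable (\<lambda>k. MH * (norm v / R0) ^ Suc k)"
      using v R0 by (intro summable_mult summable_geometric summable_Suc_iff[THEN iffD2]) auto
    show "(\<lambda>k. H z * (v / z) ^ Suc k) sums (H z * (v / (z - v)))" if z: "z \<in> sphere 0 R0" for z
    proof -
      have z0: "z \<noteq> 0" using z R0 by auto
      have nz: "norm (v / z) < 1" using z v z0 R0 by (auto simp: norm_divide)
      have "(\<lambda>k. (v / z) ^ k) sums (1 / (1 - v / z))" by (rule geometric_sums[OF nz])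
      then have S: "(\<lambda>k. H z * (v / z) * (v / z) ^ k) sums (H z * (v / z) * (1 / (1 - v / z)))" by (rule sums_mult)
      have "v \<noteq> z" using z v by auto
      then have zv: "z - v \<noteq> 0" by auto
      have e1: "(\<lambda>k. H z * (v / z) ^ Suc k) = (\<lambda>k. H z * (v / z) * (v / z) ^ k)" by (auto simp: mult.assoc)
      have e2: "H z * (v / z) * (1 / (1 - v / z)) = H z * (v / (z - v))" using z0 zv by (simp add: field_simps)
      show ?thesis by (subst e1, subst e2[symmetric]) (rule S)
    qed
  qed
  then show ?thesis using eq by simp
qed

lemma R0: "rho < R0" "0 < R0" "R0 = 3" using rho_A1 unfolding R0_def by auto

lemma Tsum:
  assumes v1: "r0 < norm v" and v2: "norm v < R0"
  shows "contour_integral (circlepath 0 r0) (\<lambda>z. H z * (v / (v - z))) +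
         contour_integral (circlepath 0 R0) (\<lambda>z. H z * (v / (z - v))) = 2 * pi * \<i> * v * H v"
proof -
  have vS: "v \<in> - SC" using SC_norm v1 r0 by force
  have img1: "path_image (circlepath 0 R0) \<subseteq> - SC - {v}" using sphere_notSC[OF R0(1)] R0 v2 by auto
  have img2: "path_image (circlepath 0 r0) \<subseteq> - SC - {v}" using sphere_notSC[OF r0(2)] r0 v1 by auto
  have hol: "(\<lambda>z. v * H z) holomorphic_on - SC" unfolding H_def by (intro holomorphic_intros hol_gC)
  have w: "winding_number (circlepath 0 R0) w = winding_number (circlepath 0 r0) w" if "w \<notin> - SC" for w
  proof -
    have "norm w \<le> rho" using SC_norm that by auto
    then have "winding_number (circlepath 0 R0) w = 1" "winding_number (circlepath 0 r0) w = 1"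
      using R0 r0 by (auto intro!: winding_number_circlepath)
    then show ?thesis by simp
  qed
  have "contour_integral (circlepath 0 R0) (\<lambda>z. v * H z / (z - v)) - contour_integral (circlepath 0 r0) (\<lambda>z. v * H z / (z - v))
      = 2 * pi * \<i> * (winding_number (circlepath 0 R0) v - winding_number (circlepath 0 r0) v) * (v * H v)"
    by (rule homologous_cauchy_formula[OF open_conn_SC hol vS _ _ img1 _ _ img2 w]) auto
  moreover have "winding_number (circlepath 0 R0) v = 1" using v2 by (intro winding_number_circlepath) auto
  moreover have "winding_number (circlepath 0 r0) v = 0"
    using v1 r0 by (intro winding_number_zero_outside[of _ "cball 0 r0"]) auto
  moreover have "contour_integral (circlepath 0 r0) (\<lambda>z. H z * (v / (v - z))) = - contour_integral (circlepath 0 r0) (\<lambda>z. v * H z / (z - v))"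
  proof -
    have "contour_integral (circlepath 0 r0) (\<lambda>z. H z * (v / (v - z))) = contour_integral (circlepath 0 r0) (\<lambda>z. - (v * H z / (z - v)))"
    proof (intro contour_integral_cong refl)
      fix z assume "z \<in> path_image (circlepath 0 r0)"
      then have "z \<noteq> v" using img2 by auto
      then have "v - z \<noteq> 0" "z - v \<noteq> 0" by auto
      then show "H z * (v / (v - z)) = - (v * H z / (z - v))" by (simp add: field_simps)
    qed
    then show ?thesis by (simp add: contour_integral_neg)
  qed
  moreover have "contour_integral (circlepath 0 R0) (\<lambda>z. H z * (v / (z - v))) = contour_integral (circlepath 0 R0) (\<lambda>z. v * H z / (z - v))"
    by (intro contour_integral_cong refl) simp
  ultimately show ?thesis by (simp add: algebra_simps)
qed

definition "J n = contour_integral (circlepath 0 (if 0 \<le> n then r0 else R0)) (gC n)"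

lemma psi_J: "psi q N t a al b c C m n = of_real ((a (m+1) - al (m+1)) / tau b c n) * (J n / (2*pi*\<i>))"
proof -
  have "contour_integral C (gC n) = J n" unfolding J_def by (rule psi_circ) (use r0(2) R0(1) in auto)
  then show ?thesis unfolding psi_eq by simp
qed

lemma sphere_p:
  assumes p: "p \<in> AS" and v: "v \<in> sphere p eps"
  shows "v \<notin> SD" "v \<notin> AS" "v \<noteq> 0" "rho + 3 * dl / 4 \<le> norm v" "norm v \<le> 2" "v \<notin> SC"
    "r0 < norm v" "norm v < R0"
proof -
  have vc: "v \<in> cball p eps" using v by auto
  show "v \<notin> SD" "rho + 3 * dl / 4 \<le> norm v" "norm v \<le> 2" "v \<notin> SC" using cball_AS[OF p vc] by auto
  show "v \<notin> AS" using cball_AS(2)[OF p vc] v eps(1) by auto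
  show "v \<noteq> 0" using \<open>v \<notin> SD\<close> notSD by auto
  show "r0 < norm v" using \<open>rho + 3 * dl / 4 \<le> norm v\<close> r0 by auto
  show "norm v < R0" using \<open>norm v \<le> 2\<close> R0 by auto
qed

lemma cont_E: "p \<in> AS \<Longrightarrow> continuous_on (sphere p eps) E"
  unfolding E_def using sphere_p
  by (intro holomorphic_on_imp_continuous_on holomorphic_on_subset[OF hol_fD]) auto

lemma outer_helper:
  assumes p: "p \<in> AS"
    and cont: "\<And>k. continuous_on (sphere p eps) (\<lambda>v. E v * w k v)"
    and M0: "\<And>k. 0 \<le> M k"
    and bnd: "\<And>k v. v \<in> sphere p eps \<Longrightarrow> norm (E v * w k v) \<le> M k"
    and M: "summable M"
    and S: "\<And>v. v \<in> sphere p eps \<Longrightarrow> (\<lambda>k. w k v) sums T v"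
  shows "(\<lambda>k. contour_integral (circlepath p eps) (\<lambda>v. E v * w k v)) sums contour_integral (circlepath p eps) (\<lambda>v. E v * T v)"
    "(\<lambda>v. E v * T v) contour_integrable_on (circlepath p eps)"
    "summable (\<lambda>k. norm (contour_integral (circlepath p eps) (\<lambda>v. E v * w k v)))"
proof -
  have S': "(\<lambda>k. E v * w k v) sums (E v * T v)" if "v \<in> sphere p eps" for v
    using S[OF that] by (rule sums_mult)
  show "(\<lambda>k. contour_integral (circlepath p eps) (\<lambda>v. E v * w k v)) sums contour_integral (circlepath p eps) (\<lambda>v. E v * T v)"
    "(\<lambda>v. E v * T v) contour_integrable_on (circlepath p eps)"
    using circle_integral_sums[OF eps(1) cont bnd M S'] by auto
  have nb: "norm (contour_integral (circlepath p eps) (\<lambda>v. E v * w k v)) \<le> M k * (2 * pi * eps)" for k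
    by (rule circle_integral_bound[OF eps(1) cont M0 bnd])
  show "summable (\<lambda>k. norm (contour_integral (circlepath p eps) (\<lambda>v. E v * w k v)))"
  proof (rule summable_comparison_test'[where N=0])
    show "summable (\<lambda>k. M k * (2 * pi * eps))" using M by (rule summable_mult2)
  qed (use nb in auto)
qed

lemma cont_gC: "rho < rr \<Longrightarrow> continuous_on (sphere 0 rr) (gC n)"
  using sphere_notSC
  by (intro holomorphic_on_imp_continuous_on holomorphic_on_subset[OF hol_gC]) auto

lemma cont_fD: "p \<in> AS \<Longrightarrow> continuous_on (sphere p eps) (fD n)"
  using sphere_p
  by (intro holomorphic_on_imp_continuous_on holomorphic_on_subset[OF hol_fD]) auto

lemma per_p:
  assumes p: "p \<in> AS"
  shows "((\<lambda>n. contour_integral (circlepath p eps) (fD n) * J n) has_sum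
           contour_integral (circlepath p eps) (\<lambda>v. E v * (2 * pi * \<i> * v * H v))) UNIV"
proof -
  obtain ME where ME: "ME > 0" "\<And>v. v \<in> sphere p eps \<Longrightarrow> norm (E v) \<le> ME"
    using sphere_bound[OF cont_E[OF p]] by blast
  obtain MHr where MHr: "MHr > 0" "\<And>z. z \<in> sphere 0 r0 \<Longrightarrow> norm (H z) \<le> MHr"
    using sphere_bound[OF cont_H[OF r0(2)]] by blast
  obtain MHR where MHR: "MHR > 0" "\<And>z. z \<in> sphere 0 R0 \<Longrightarrow> norm (H z) \<le> MHR"
    using sphere_bound[OF cont_H[OF R0(1)]] by blast
  define r1 where "r1 = rho + 3 * dl / 4"
  have r1: "r0 < r1" "0 < r1" using r0 unfolding r1_def by auto
  have sp: "r1 \<le> norm v" "norm v \<le> 2" "v \<noteq> 0" "r0 < norm v" "norm v < R0" if "v \<in> sphere p eps" for v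
    using sphere_p[OF p that] unfolding r1_def by auto
  define c where "c = circlepath p eps"
  have Jpos: "norm (J (int k)) \<le> MHr * r0 ^ k * (2 * pi * r0)" for k
  proof -
    have "J (int k) = contour_integral (circlepath 0 r0) (gC (int k))" unfolding J_def by simp
    also have "norm \<dots> \<le> MHr * r0 ^ k * (2 * pi * r0)"
    proof (rule circle_integral_bound[OF r0(1) cont_gC[OF r0(2)]])
      show "0 \<le> MHr * r0 ^ k" using MHr r0 by auto
      fix z :: complex assume z: "z \<in> sphere 0 r0"
      then have "z \<noteq> 0" using r0 by auto
      then have "norm (gC (int k) z) = norm (H z) * r0 ^ k" using z by (simp add: gC_H norm_mult norm_power)
      also have "\<dots> \<le> MHr * r0 ^ k" using MHr z r0 by (intro mult_right_mono) auto
      finally show "norm (gC (int k) z) \<le> MHr * r0 ^ k" .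
    qed
    finally show ?thesis .
  qed
  have Jneg: "norm (J (- int (Suc k))) \<le> MHR / R0 ^ Suc k * (2 * pi * R0)" for k
  proof -
    have "J (- int (Suc k)) = contour_integral (circlepath 0 R0) (gC (- int (Suc k)))" unfolding J_def by simp
    also have "norm \<dots> \<le> MHR / R0 ^ Suc k * (2 * pi * R0)"
    proof (rule circle_integral_bound[OF R0(2) cont_gC[OF R0(1)]])
      show "0 \<le> MHR / R0 ^ Suc k" using MHR R0 by auto
      fix z :: complex assume z: "z \<in> sphere 0 R0"
      then have z0: "z \<noteq> 0" using R0 by auto
      have "gC (- int (Suc k)) z = H z / z ^ Suc k"
        by (simp only: gC_H[OF z0] power_int_minus power_int_of_nat) (simp add: divide_inverse)
      then have "norm (gC (- int (Suc k)) z) = norm (H z) / R0 ^ Suc k" using z by (simp add: norm_divide norm_power norm_mult)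
      also have "\<dots> \<le> MHR / R0 ^ Suc k" using MHR z R0 by (intro divide_right_mono) auto
      finally show "norm (gC (- int (Suc k)) z) \<le> MHR / R0 ^ Suc k" .
    qed
    finally show ?thesis .
  qed
  define Tp where "Tp v = contour_integral (circlepath 0 r0) (\<lambda>z. H z * (v / (v - z)))" for v
  define Tn where "Tn v = contour_integral (circlepath 0 R0) (\<lambda>z. H z * (v / (z - v)))" for v
  define Mp where "Mp k = ME * (MHr * r0 ^ k * (2 * pi * r0)) / r1 ^ k" for k
  define Mn where "Mn k = ME * (MHR / R0 ^ Suc k * (2 * pi * R0) * 2 ^ Suc k)" for k
  have xPh1: "\<And>k. continuous_on (sphere p eps) (\<lambda>v. E v * (J (int k) / v ^ k))"
    using sp by (intro continuous_intros cont_E[OF p]) auto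
  have xPh2: "\<And>k. 0 \<le> Mp k" unfolding Mp_def using ME MHr r0 r1 by auto
  have xPh3: "norm (E v * (J (int k) / v ^ k)) \<le> Mp k" if v: "v \<in> sphere p eps" for k v
  proof -
    have "norm (E v * (J (int k) / v ^ k)) = norm (E v) * (norm (J (int k)) / norm v ^ k)"
      by (simp add: norm_mult norm_divide norm_power)
    also have "\<dots> \<le> ME * ((MHr * r0 ^ k * (2 * pi * r0)) / r1 ^ k)"
      using ME ME(2)[OF v] Jpos[of k] sp[OF v] r1 MHr r0
      by (intro mult_mono frac_le power_mono) auto
    finally show ?thesis unfolding Mp_def by simp
  qed
  have "Mp = (\<lambda>k. (ME * MHr * (2 * pi * r0)) * (r0 / r1) ^ k)"
    unfolding Mp_def by (auto simp: power_divide)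
  then have xPh4: "summable Mp" using r0 r1 by (auto intro!: summable_mult summable_geometric)
  have xPh5: "(\<lambda>k. J (int k) / v ^ k) sums Tp v" if v: "v \<in> sphere p eps" for v
    unfolding Tp_def J_def using inner_pos[OF sp(4)[OF v]] by simp
  have P: "(\<lambda>k. contour_integral c (\<lambda>v. E v * (J (int k) / v ^ k))) sums contour_integral c (\<lambda>v. E v * Tp v)"
    "(\<lambda>v. E v * Tp v) contour_integrable_on c"
    "summable (\<lambda>k. norm (contour_integral c (\<lambda>v. E v * (J (int k) / v ^ k))))"
    unfolding c_def using outer_helper[OF p xPh1 xPh2 xPh3 xPh4 xPh5] by auto
  have xNnh1: "\<And>k. continuous_on (sphere p eps) (\<lambda>v. E v * (J (- int (Suc k)) * v ^ Suc k))"
    by (intro continuous_intros cont_E[OF p])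
  have xNnh2: "\<And>k. 0 \<le> Mn k" unfolding Mn_def using ME MHR R0 by auto
  have xNnh3: "norm (E v * (J (- int (Suc k)) * v ^ Suc k)) \<le> Mn k" if v: "v \<in> sphere p eps" for k v
  proof -
    have "norm (E v * (J (- int (Suc k)) * v ^ Suc k)) = norm (E v) * (norm (J (- int (Suc k))) * norm v ^ Suc k)"
      by (simp add: norm_mult norm_power)
    also have "\<dots> \<le> ME * (MHR / R0 ^ Suc k * (2 * pi * R0) * 2 ^ Suc k)"
      using ME ME(2)[OF v] Jneg[of k] sp[OF v] MHR R0
      by (intro mult_mono power_mono) auto
    finally show ?thesis unfolding Mn_def by simp
  qed
  have "Mn = (\<lambda>k. (ME * MHR * (2 * pi * R0) * (2 / R0)) * (2 / R0) ^ k)"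
    unfolding Mn_def using R0 by (auto simp: power_divide field_simps)
  then have xNnh4: "summable Mn" using R0 by (auto intro!: summable_mult summable_geometric)
  have xNnh5: "(\<lambda>k. J (- int (Suc k)) * v ^ Suc k) sums Tn v" if v: "v \<in> sphere p eps" for v
    unfolding Tn_def J_def using inner_neg[OF sp(5)[OF v]] by simp
  have Nn: "(\<lambda>k. contour_integral c (\<lambda>v. E v * (J (- int (Suc k)) * v ^ Suc k))) sums contour_integral c (\<lambda>v. E v * Tn v)"
    "(\<lambda>v. E v * Tn v) contour_integrable_on c"
    "summable (\<lambda>k. norm (contour_integral c (\<lambda>v. E v * (J (- int (Suc k)) * v ^ Suc k))))"
    unfolding c_def using outer_helper[OF p xNnh1 xNnh2 xNnh3 xNnh4 xNnh5] by auto
  have ci: "fD n contour_integrable_on c" for n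
    unfolding c_def using eps(1) by (intro contour_integrable_continuous_circlepath) (auto intro: cont_fD[OF p])
  have up: "contour_integral c (fD (int k)) * J (int k) = contour_integral c (\<lambda>v. E v * (J (int k) / v ^ k))" for k
  proof -
    have "contour_integral c (fD (int k)) * J (int k) = contour_integral c (\<lambda>v. fD (int k) v * J (int k))"
      by (rule contour_integral_rmul[symmetric, OF ci])
    also have "\<dots> = contour_integral c (\<lambda>v. E v * (J (int k) / v ^ k))"
    proof (intro contour_integral_cong refl)
      fix v assume "v \<in> path_image c"
      then have v0: "v \<noteq> 0" using sp eps(1) unfolding c_def by auto
      show "fD (int k) v * J (int k) = E v * (J (int k) / v ^ k)"
        by (simp add: fD_E[OF v0] power_int_of_nat)
    qed
    finally show ?thesis .
  qed
  have un: "contour_integral c (fD (- int (Suc k))) * J (- int (Suc k)) = contour_integral c (\<lambda>v. E v * (J (- int (Suc k)) * v ^ Suc k))" for k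
  proof -
    have "contour_integral c (fD (- int (Suc k))) * J (- int (Suc k)) = contour_integral c (\<lambda>v. fD (- int (Suc k)) v * J (- int (Suc k)))"
      by (rule contour_integral_rmul[symmetric, OF ci])
    also have "\<dots> = contour_integral c (\<lambda>v. E v * (J (- int (Suc k)) * v ^ Suc k))"
    proof (intro contour_integral_cong refl)
      fix v assume "v \<in> path_image c"
      then have v0: "v \<noteq> 0" using sp eps(1) unfolding c_def by auto
      have "fD (- int (Suc k)) v = E v * v ^ Suc k"
        by (simp only: fD_E[OF v0] power_int_minus power_int_of_nat) (simp add: divide_inverse)
      then show "fD (- int (Suc k)) v * J (- int (Suc k)) = E v * (J (- int (Suc k)) * v ^ Suc k)"
        by simp
    qed
    finally show ?thesis .
  qed
  have HS: "((\<lambda>n. contour_integral c (fD n) * J n) has_sum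
      (contour_integral c (\<lambda>v. E v * Tp v) + contour_integral c (\<lambda>v. E v * Tn v))) UNIV"
    by (rule has_sum_int_split) (use P Nn up un in simp_all)
  have "contour_integral c (\<lambda>v. E v * Tp v) + contour_integral c (\<lambda>v. E v * Tn v)
      = contour_integral c (\<lambda>v. E v * Tp v + E v * Tn v)"
    by (rule contour_integral_add[symmetric, OF P(2) Nn(2)])
  also have "\<dots> = contour_integral c (\<lambda>v. E v * (2 * pi * \<i> * v * H v))"
  proof (intro contour_integral_cong refl)
    fix v assume "v \<in> path_image c"
    then have v: "v \<in> sphere p eps" using eps(1) unfolding c_def by auto
    show "E v * Tp v + E v * Tn v = E v * (2 * pi * \<i> * v * H v)"
      using Tsum[OF sp(4)[OF v] sp(5)[OF v]] unfolding Tp_def Tn_def by (simp add: distrib_left[symmetric])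
  qed
  finally show ?thesis using HS unfolding c_def by simp
qed

definition "Pl v = (\<Prod>j=1..l. (v - of_real (al j)) / (v - of_real (a j)))"
definition "Pm v = (\<Prod>j=1..m. (v - of_real (a j)) / (v - of_real (al j)))"
definition "Rs v = 1 / (v - of_real (a (l+1))) * (1 / (v - of_real (al (m+1)))) * Pl v * Pm v"

lemma EH_Rs:
  assumes v: "v \<notin> SD" "v \<notin> SC"
  shows "E v * (2 * pi * \<i> * v * H v) = 2 * pi * \<i> * Rs v"
proof -
  define QA where "QA = (\<Prod>k=1..N. qpoch (of_real q * of_real (al k) / v) q / qpoch (of_real q * v / of_real (a k)) q)"
  define QB where "QB = (\<Prod>k=1..N. qpoch (of_real q * v / of_real (a k)) q / qpoch (of_real q * of_real (al k) / v) q)"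
  have "QA * QB = (\<Prod>k=1..N. qpoch (of_real q * of_real (al k) / v) q / qpoch (of_real q * v / of_real (a k)) q
      * (qpoch (of_real q * v / of_real (a k)) q / qpoch (of_real q * of_real (al k) / v) q))"
    unfolding QA_def QB_def by (rule prod.distrib[symmetric])
  also have "\<dots> = 1" using QD_nz[OF v(1)] QC_nz[OF v(2)] by (intro prod.neutral) auto
  finally have QAB: "QA * QB = 1" .
  have ex: "exp (- v * of_real t) * exp (v * of_real t) = 1" by (simp add: exp_minus field_simps)
  have v0: "v \<noteq> 0" using notSD[OF v(1)] .
  then have vp: "v powi int N \<noteq> 0" by simp
  have "E v * (2 * pi * \<i> * v * H v) = 2 * pi * \<i> * Rs v * (exp (- v * of_real t) * exp (v * of_real t)) * (QA * QB)
        * (v * (1 / v)) * (v powi int N * (1 / v powi int N))"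
    unfolding E_def H_def fD_def gC_def Rs_def Pl_def Pm_def QA_def QB_def
    by (simp add: divide_inverse ac_simps)
  also have "\<dots> = 2 * pi * \<i> * Rs v" using ex QAB v0 vp by simp
  finally show ?thesis .
qed

lemma prod_inv_cancel: "(\<And>j. j \<in> A \<Longrightarrow> f j * g j = (1::complex)) \<Longrightarrow> prod f A * prod g A = 1"
  by (simp add: prod.distrib[symmetric])

lemma alg1: "x \<noteq> 0 \<Longrightarrow> y \<noteq> 0 \<Longrightarrow> z \<noteq> 0 \<Longrightarrow> 1 / x * (1 / z) * (x / y * X) = 1 / z * (1 / y) * (X::complex)"
  by (simp add: field_simps)

lemma div_cancel2: "x \<noteq> 0 \<Longrightarrow> y \<noteq> 0 \<Longrightarrow> x / y * (y / x) = (1::complex)" by simp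

lemma sph: assumes "p \<in> AS" "v \<in> sphere p eps" "j \<in> {1..N}"
  shows "v - of_real (a j) \<noteq> 0" "v - of_real (al j) \<noteq> 0"
  using sphere_p[OF assms(1,2)] notAS notSC_al assms(3) by auto

lemma hol_Rs: "Rs holomorphic_on - (AS \<union> SC)"
  unfolding Rs_def Pl_def Pm_def using lm
  by (intro holomorphic_intros) (auto simp: notAS notSC_al)

lemma cont_Rs: "p \<in> AS \<Longrightarrow> continuous_on (sphere p eps) Rs"
  using sphere_p by (intro holomorphic_on_imp_continuous_on holomorphic_on_subset[OF hol_Rs]) auto

lemma circ_inv:
  assumes "w \<notin> sphere p eps"
  shows "contour_integral (circlepath p eps) (\<lambda>v. 1 / (v - w)) = 2 * pi * \<i> * winding_number (circlepath p eps) w"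
  using winding_number_valid_path[of "circlepath p eps" w] assms eps(1) by simp

lemma wind_out:
  assumes "eps < norm (w - p)"
  shows "winding_number (circlepath p eps) w = 0"
  using assms eps(1)
  by (intro winding_number_zero_outside[of _ "cball p eps"]) (auto simp: dist_norm norm_minus_commute)

lemma far_al: assumes "p \<in> AS" "k \<in> {1..N}" shows "eps < norm (of_real (al k) - p)"
proof -
  have "norm (of_real (al k) :: complex) \<le> rho" using al_bnd[OF assms(2)] by simp
  moreover have "A1 \<le> norm p" using AS_norm[OF assms(1)] by simp
  moreover have "norm p - norm (of_real (al k) :: complex) \<le> norm (of_real (al k) - p)"
    using norm_triangle_ineq2[of p "of_real (al k)"] by (simp add: norm_minus_commute)
  ultimately show ?thesis using eps(3) dl_pos unfolding dl_def by (simp add: field_simps)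
qed

lemma case_eq:
  assumes lm_eq: "l = m"
  shows "of_real (a (m+1) - al (m+1)) * (\<Sum>p\<in>AS. contour_integral (circlepath p eps) Rs) = 2 * pi * \<i>"
proof -
  define aa where "aa = complex_of_real (a (l+1))"
  define \<alpha> where "\<alpha> = complex_of_real (al (l+1))"
  have l1: "l + 1 \<in> {1..N}" using lm by auto
  have aaAS: "aa \<in> AS" unfolding aa_def AS_def using l1 by auto
  have eqf: "of_real (a (m+1) - al (m+1)) * Rs v = 1 / (v - aa) - 1 / (v - \<alpha>)"
    if p: "p \<in> AS" and v: "v \<in> sphere p eps" for p v
  proof -
    have PP: "Pl v * Pm v = 1" unfolding Pl_def Pm_def unfolding lm_eq[symmetric]
      by (intro prod_inv_cancel div_cancel2) (use sph[OF p v] lm in auto)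
    have nz: "v - aa \<noteq> 0" "v - \<alpha> \<noteq> 0" using sph[OF p v l1] unfolding aa_def \<alpha>_def by auto
    have "Rs v = 1 / (v - aa) * (1 / (v - \<alpha>)) * (Pl v * Pm v)"
      unfolding Rs_def aa_def \<alpha>_def using lm_eq by (simp add: mult.assoc)
    then have R: "Rs v = 1 / (v - aa) * (1 / (v - \<alpha>))" using PP by simp
    have K: "complex_of_real (a (m+1) - al (m+1)) = aa - \<alpha>" unfolding aa_def \<alpha>_def using lm_eq by simp
    have "(aa - \<alpha>) * (1 / (v - aa) * (1 / (v - \<alpha>))) = 1 / (v - aa) - 1 / (v - \<alpha>)"
      using nz by (simp add: field_simps)
    then show ?thesis using R K by simp
  qed
  have "of_real (a (m+1) - al (m+1)) * (\<Sum>p\<in>AS. contour_integral (circlepath p eps) Rs)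
      = (\<Sum>p\<in>AS. contour_integral (circlepath p eps) (\<lambda>v. of_real (a (m+1) - al (m+1)) * Rs v))"
    unfolding sum_distrib_left
    using cont_Rs eps(1) by (intro sum.cong refl contour_integral_lmul[symmetric] contour_integrable_continuous_circlepath) auto
  also have "\<dots> = (\<Sum>p\<in>AS. if p = aa then 2 * pi * \<i> else 0)"
  proof (intro sum.cong refl)
    fix p assume p: "p \<in> AS"
    have "contour_integral (circlepath p eps) (\<lambda>v. of_real (a (m+1) - al (m+1)) * Rs v)
        = contour_integral (circlepath p eps) (\<lambda>v. 1 / (v - aa) - 1 / (v - \<alpha>))"
      using eqf[OF p] eps(1) by (intro contour_integral_cong refl) auto
    also have "\<dots> = contour_integral (circlepath p eps) (\<lambda>v. 1 / (v - aa)) - contour_integral (circlepath p eps) (\<lambda>v. 1 / (v - \<alpha>))"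
      using sph[OF p _ l1] eps(1) unfolding aa_def \<alpha>_def
      by (intro contour_integral_diff contour_integrable_continuous_circlepath continuous_intros) auto
    also have "contour_integral (circlepath p eps) (\<lambda>v. 1 / (v - \<alpha>)) = 0"
    proof -
      have "eps < norm (\<alpha> - p)" unfolding \<alpha>_def by (rule far_al[OF p l1])
      then show ?thesis using circ_inv[of \<alpha> p] wind_out[of \<alpha> p] by (auto simp: dist_norm norm_minus_commute)
    qed
    also have "contour_integral (circlepath p eps) (\<lambda>v. 1 / (v - aa)) = (if p = aa then 2 * pi * \<i> else 0)"
    proof (cases "p = aa")
      case True
      then show ?thesis using circ_inv[of aa p] winding_number_circlepath[of aa p eps] eps(1) by auto
    next
      case False
      then have "eps < norm (aa - p)" using eps(4)[OF p, of aa] aaAS by auto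
      then show ?thesis using False circ_inv[of aa p] wind_out[of aa p] by (auto simp: dist_norm norm_minus_commute)
    qed
    finally show "contour_integral (circlepath p eps) (\<lambda>v. of_real (a (m+1) - al (m+1)) * Rs v) = (if p = aa then 2 * pi * \<i> else 0)"
      by simp
  qed
  also have "\<dots> = 2 * pi * \<i>" using aaAS finite_AS by (simp add: sum.delta)
  finally show ?thesis .
qed

lemma case_lt:
  assumes lm_lt: "l < m" and p: "p \<in> AS"
  shows "contour_integral (circlepath p eps) Rs = 0"
proof -
  define R' where "R' v = 1 / (v - of_real (al (m+1))) * (1 / (v - of_real (al (l+1)))) *
      (\<Prod>j=Suc (Suc l)..m. (v - of_real (a j)) / (v - of_real (al j)))" for v :: complex
  have eq: "Rs v = R' v" if v: "v \<in> sphere p eps" for v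
  proof -
    have s: "{1..m} = {1..l} \<union> {Suc l..m}" using lm_lt by auto
    have "Pm v = (\<Prod>j=1..l. (v - of_real (a j)) / (v - of_real (al j))) * (\<Prod>j=Suc l..m. (v - of_real (a j)) / (v - of_real (al j)))"
      unfolding Pm_def s by (rule prod.union_disjoint) auto
    moreover have "Pl v * (\<Prod>j=1..l. (v - of_real (a j)) / (v - of_real (al j))) = 1"
      unfolding Pl_def by (intro prod_inv_cancel div_cancel2) (use sph[OF p v] lm lm_lt in auto)
    moreover have "(\<Prod>j=Suc l..m. (v - of_real (a j)) / (v - of_real (al j))) =
        (v - of_real (a (Suc l))) / (v - of_real (al (Suc l))) * (\<Prod>j=Suc (Suc l)..m. (v - of_real (a j)) / (v - of_real (al j)))"
      using lm_lt by (intro prod.atLeast_Suc_atMost) auto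
    ultimately have PP: "Pl v * Pm v = (v - of_real (a (Suc l))) / (v - of_real (al (Suc l))) * (\<Prod>j=Suc (Suc l)..m. (v - of_real (a j)) / (v - of_real (al j)))"
      by (simp add: ac_simps)
    have nz: "v - of_real (a (Suc l)) \<noteq> 0" "v - of_real (al (Suc l)) \<noteq> 0" "v - of_real (al (Suc m)) \<noteq> 0"
      using sph[OF p v, of "Suc l"] sph[OF p v, of "Suc m"] lm by auto
    have "Rs v = 1 / (v - of_real (a (Suc l))) * (1 / (v - of_real (al (Suc m)))) * (Pl v * Pm v)"
      unfolding Rs_def by (simp add: mult.assoc)
    also have "\<dots> = 1 / (v - of_real (a (Suc l))) * (1 / (v - of_real (al (Suc m)))) * ((v - of_real (a (Suc l))) / (v - of_real (al (Suc l))) * (\<Prod>j=Suc (Suc l)..m. (v - of_real (a j)) / (v - of_real (al j))))"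
      unfolding PP ..
    also have "\<dots> = R' v" unfolding R'_def using alg1[OF nz(1,2,3)] by simp
    finally show ?thesis .
  qed
  have ball: "norm (of_real (al k) :: complex) < norm v" if "v \<in> ball p (A1 - rho)" "k \<in> {1..N}" for v k
  proof -
    have "norm p - norm (p - v) \<le> norm v" using norm_triangle_ineq2[of p "p - v"] by simp
    moreover have "norm (p - v) < A1 - rho" using that by (simp add: dist_norm)
    moreover have "A1 \<le> norm p" using AS_norm[OF p] by simp
    moreover have "norm (of_real (al k) :: complex) \<le> rho" using al_bnd[OF that(2)] by simp
    ultimately show ?thesis by linarith
  qed
  have ballnz: "v - of_real (al k) \<noteq> 0" if "v \<in> ball p (A1 - rho)" "1 \<le> k" "k \<le> N" for v k
    using ball[of v k] that by auto
  have hol: "R' holomorphic_on ball p (A1 - rho)"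
  proof -
    have nd: "\<not> dist p (of_real (al k)) < A1 - rho" if "1 \<le> k" "k \<le> N" for k
      using ballnz[of "of_real (al k)" k] that by auto
    show ?thesis unfolding R'_def by (intro holomorphic_intros) (use lm nd in auto)
  qed
  have sub: "path_image (circlepath p eps) \<subseteq> ball p (A1 - rho)"
    using eps(1,3) dl_pos unfolding dl_def by (auto simp: dist_norm)
  have "(R' has_contour_integral 0) (circlepath p eps)"
    by (rule Cauchy_theorem_convex_simple[OF hol convex_ball valid_path_circlepath sub]) simp
  then have "contour_integral (circlepath p eps) R' = 0" by (rule contour_integral_unique)
  moreover have "contour_integral (circlepath p eps) Rs = contour_integral (circlepath p eps) R'"
    using eq eps(1) by (intro contour_integral_cong refl) auto
  ultimately show ?thesis by simp
qed

lemma alg2: "x \<noteq> 0 \<Longrightarrow> y \<noteq> 0 \<Longrightarrow> z \<noteq> 0 \<Longrightarrow> 1 / x * (1 / z) * (z / y * X) = 1 / x * (1 / y) * (X::complex)"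
  by (simp add: field_simps)

lemma AS_mem: "k \<in> {1..N} \<Longrightarrow> complex_of_real (a k) \<in> AS" unfolding AS_def by auto

lemma case_gt:
  assumes lm_gt: "m < l"
  shows "(\<Sum>p\<in>AS. contour_integral (circlepath p eps) Rs) = 0"
proof -
  define R'' where "R'' v = 1 / (v - of_real (a (l+1))) * (1 / (v - of_real (a (m+1)))) *
      (\<Prod>j=Suc (Suc m)..l. (v - of_real (al j)) / (v - of_real (a j)))" for v :: complex
  have eq: "Rs v = R'' v" if p: "p \<in> AS" and v: "v \<in> sphere p eps" for p v
  proof -
    have s: "{1..l} = {1..m} \<union> {Suc m..l}" using lm_gt by auto
    have "Pl v = (\<Prod>j=1..m. (v - of_real (al j)) / (v - of_real (a j))) * (\<Prod>j=Suc m..l. (v - of_real (al j)) / (v - of_real (a j)))"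
      unfolding Pl_def s by (rule prod.union_disjoint) auto
    moreover have "(\<Prod>j=1..m. (v - of_real (al j)) / (v - of_real (a j))) * Pm v = 1"
      unfolding Pm_def by (intro prod_inv_cancel div_cancel2) (use sph[OF p v] lm lm_gt in auto)
    moreover have "(\<Prod>j=Suc m..l. (v - of_real (al j)) / (v - of_real (a j))) =
        (v - of_real (al (Suc m))) / (v - of_real (a (Suc m))) * (\<Prod>j=Suc (Suc m)..l. (v - of_real (al j)) / (v - of_real (a j)))"
      using lm_gt by (intro prod.atLeast_Suc_atMost) auto
    ultimately have PP: "Pl v * Pm v = (v - of_real (al (Suc m))) / (v - of_real (a (Suc m))) * (\<Prod>j=Suc (Suc m)..l. (v - of_real (al j)) / (v - of_real (a j)))"
      by (simp add: ac_simps)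
    have nz: "v - of_real (a (Suc l)) \<noteq> 0" "v - of_real (a (Suc m)) \<noteq> 0" "v - of_real (al (Suc m)) \<noteq> 0"
      using sph[OF p v, of "Suc l"] sph[OF p v, of "Suc m"] lm by auto
    have "Rs v = 1 / (v - of_real (a (Suc l))) * (1 / (v - of_real (al (Suc m)))) * (Pl v * Pm v)"
      unfolding Rs_def by (simp add: mult.assoc)
    also have "\<dots> = 1 / (v - of_real (a (Suc l))) * (1 / (v - of_real (al (Suc m)))) * ((v - of_real (al (Suc m))) / (v - of_real (a (Suc m))) * (\<Prod>j=Suc (Suc m)..l. (v - of_real (al j)) / (v - of_real (a j))))"
      unfolding PP ..
    also have "\<dots> = R'' v" unfolding R''_def using alg2[OF nz(1,2,3)] by simp
    finally show ?thesis .
  qed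
  have hol: "R'' holomorphic_on UNIV - AS"
  proof -
    have nd: "of_real (a k) \<notin> UNIV - AS" if "1 \<le> k" "k \<le> N" for k
      using AS_mem[of k] that by auto
    show ?thesis unfolding R''_def by (intro holomorphic_intros) (use lm lm_gt nd in auto)
  qed
  define Y where "Y = (\<Sum>p\<in>AS. contour_integral (circlepath p eps) R'')"
  have S1: "(\<Sum>p\<in>AS. contour_integral (circlepath p eps) Rs) = Y"
    unfolding Y_def using eq eps(1) by (intro sum.cong refl contour_integral_cong) auto
  have res: "contour_integral (circlepath 0 \<rho>) R'' = Y" if \<rho>: "2 \<le> \<rho>" for \<rho>
  proof -
    have img: "path_image (circlepath 0 \<rho>) \<subseteq> UNIV - AS" using AS_norm \<rho> by fastforce
    have "contour_integral (circlepath 0 \<rho>) R'' = 2 * pi * \<i> * (\<Sum>p\<in>AS. winding_number (circlepath 0 \<rho>) p * residue R'' p)"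
      by (rule Residue_theorem[OF open_UNIV connected_UNIV finite_AS hol valid_path_circlepath _ img]) auto
    also have "\<dots> = Y" unfolding Y_def sum_distrib_left
    proof (intro sum.cong refl)
      fix p assume p: "p \<in> AS"
      have w: "winding_number (circlepath 0 \<rho>) p = 1"
        using AS_norm(2)[OF p] \<rho> by (intro winding_number_circlepath) auto
      have "open (UNIV - (AS - {p}))" using finite_AS by (auto intro: open_Diff finite_imp_closed)
      moreover have "R'' holomorphic_on (UNIV - (AS - {p})) - {p}"
        using hol by (rule holomorphic_on_subset) auto
      moreover have "cball p eps \<subseteq> UNIV - (AS - {p})" using cball_AS(2)[OF p] by auto
      ultimately have "(R'' has_contour_integral 2 * pi * \<i> * residue R'' p) (circlepath p eps)"
        using eps(1) by (intro base_residue) auto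
      then show "2 * pi * \<i> * (winding_number (circlepath 0 \<rho>) p * residue R'' p) = contour_integral (circlepath p eps) R''"
        using w contour_integral_unique by auto
    qed
    finally show ?thesis .
  qed
  have bnd: "norm Y \<le> 8 * pi * 3 ^ N / \<rho>" if \<rho>: "2 \<le> \<rho>" for \<rho>
  proof -
    have cont: "continuous_on (sphere 0 \<rho>) R''"
      using AS_norm \<rho> by (intro holomorphic_on_imp_continuous_on holomorphic_on_subset[OF hol]) fastforce
    have nb: "norm (R'' v) \<le> 4 * 3 ^ N / \<rho>^2" if v: "v \<in> sphere 0 \<rho>" for v
    proof -
      have nv: "norm v = \<rho>" using v by simp
      have da: "\<rho> / 2 \<le> norm (v - of_real (a k))" if "k \<in> {1..N}" for k
      proof -
        have "norm v - norm (of_real (a k) :: complex) \<le> norm (v - of_real (a k))" by (rule norm_triangle_ineq2)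
        moreover have "norm (of_real (a k) :: complex) \<le> 1" using a_pos[OF that] by simp
        ultimately show ?thesis using nv \<rho> by linarith
      qed
      have ia: "norm (1 / (v - of_real (a k))) \<le> 2 / \<rho>" if "k \<in> {1..N}" for k
      proof -
        have "0 < \<rho> / 2" using \<rho> by simp
        moreover have "0 < norm (v - of_real (a k))" using da[OF that] \<open>0 < \<rho> / 2\<close> by linarith
        ultimately have "1 / norm (v - of_real (a k)) \<le> 1 / (\<rho> / 2)" using da[OF that] by (intro divide_left_mono) auto
        then show ?thesis by (simp add: norm_divide)
      qed
      have fr: "norm ((v - of_real (al j)) / (v - of_real (a j))) \<le> 3" if "j \<in> {1..N}" for j
      proof -
        have "norm (v - of_real (al j)) \<le> norm v + norm (of_real (al j) :: complex)" by (rule norm_triangle_ineq4)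
        moreover have "norm (of_real (al j) :: complex) \<le> 1" using aal[OF that that] by simp
        ultimately have n1: "norm (v - of_real (al j)) \<le> \<rho> + 1" using nv by linarith
        have pos: "0 < norm (v - of_real (a j))" using da[OF that] \<rho> by linarith
        have "norm (v - of_real (al j)) \<le> 3 * norm (v - of_real (a j))"
          using n1 da[OF that] \<rho> by linarith
        then show ?thesis using pos by (simp add: norm_divide divide_le_eq)
      qed
      have "norm (\<Prod>j=Suc (Suc m)..l. (v - of_real (al j)) / (v - of_real (a j))) =
          (\<Prod>j=Suc (Suc m)..l. norm ((v - of_real (al j)) / (v - of_real (a j))))"
        by (rule prod_norm[symmetric])
      also have "\<dots> \<le> (\<Prod>j=Suc (Suc m)..l. (3::real))"
        using lm by (intro prod_mono) (auto intro!: fr)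
      also have "\<dots> = 3 ^ card {Suc (Suc m)..l}" by simp
      also have "\<dots> \<le> 3 ^ N" using lm by (intro power_increasing) auto
      finally have np: "norm (\<Prod>j=Suc (Suc m)..l. (v - of_real (al j)) / (v - of_real (a j))) \<le> 3 ^ N" .
      have l1: "l + 1 \<in> {1..N}" "m + 1 \<in> {1..N}" using lm by auto
      have "norm (R'' v) = norm (1 / (v - of_real (a (l+1)))) * norm (1 / (v - of_real (a (m+1)))) *
          norm (\<Prod>j=Suc (Suc m)..l. (v - of_real (al j)) / (v - of_real (a j)))"
        unfolding R''_def by (simp only: norm_mult)
      also have "\<dots> \<le> (2 / \<rho>) * (2 / \<rho>) * 3 ^ N"
        using ia[OF l1(1)] ia[OF l1(2)] np \<rho> by (intro mult_mono) auto
      also have "\<dots> = 4 * 3 ^ N / \<rho>^2" by (simp add: power2_eq_square)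
      finally show ?thesis .
    qed
    have "norm (contour_integral (circlepath 0 \<rho>) R'') \<le> 4 * 3 ^ N / \<rho>^2 * (2 * pi * \<rho>)"
      using \<rho> by (intro circle_integral_bound[OF _ cont _ nb]) auto
    also have "\<dots> = 8 * pi * 3 ^ N / \<rho>" using \<rho> by (simp add: power2_eq_square field_simps)
    finally show ?thesis using res[OF \<rho>] by simp
  qed
  have "Y = 0"
  proof (rule ccontr)
    assume Y: "Y \<noteq> 0"
    define \<rho> where "\<rho> = max 2 (16 * pi * 3 ^ N / norm Y)"
    have \<rho>2: "2 \<le> \<rho>" unfolding \<rho>_def by simp
    have "16 * pi * 3 ^ N / norm Y \<le> \<rho>" unfolding \<rho>_def by simp
    then have "16 * pi * 3 ^ N \<le> \<rho> * norm Y" using Y by (simp add: divide_le_eq mult.commute)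
    moreover have "norm Y * \<rho> \<le> 8 * pi * 3 ^ N" using bnd[OF \<rho>2] \<rho>2 by (simp add: le_divide_eq)
    ultimately have "16 * (pi * 3 ^ N) \<le> \<rho> * norm Y" "\<rho> * norm Y \<le> 8 * (pi * 3 ^ N)"
      by (simp_all add: algebra_simps)
    moreover have "0 < pi * 3 ^ N" by simp
    ultimately show False by linarith
  qed
  then show ?thesis using S1 by simp
qed

lemma sum_Rs_value:
  "of_real (a (m+1) - al (m+1)) * (\<Sum>p\<in>AS. contour_integral (circlepath p eps) Rs) = 2 * pi * \<i> * (if l = m then 1 else 0)"
proof (cases "l = m")
  case True then show ?thesis using case_eq by simp
next
  case False
  then have "l < m \<or> m < l" by auto
  then have "(\<Sum>p\<in>AS. contour_integral (circlepath p eps) Rs) = 0"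
  proof
    assume "l < m" then show ?thesis using case_lt by simp
  next
    assume "m < l" then show ?thesis by (rule case_gt)
  qed
  then show ?thesis using False by simp
qed

lemma final_value:
  "of_real (a (m+1) - al (m+1)) * (\<Sum>p\<in>AS. contour_integral (circlepath p eps) (\<lambda>v. E v * (2 * pi * \<i> * v * H v)))
     / (2 * pi * \<i>)^2 = (if l = m then 1 else 0)"
proof -
  have "(\<Sum>p\<in>AS. contour_integral (circlepath p eps) (\<lambda>v. E v * (2 * pi * \<i> * v * H v)))
      = (\<Sum>p\<in>AS. contour_integral (circlepath p eps) (\<lambda>v. 2 * pi * \<i> * Rs v))"
  proof (intro sum.cong refl contour_integral_cong)
    fix p v assume p: "p \<in> AS" and v: "v \<in> path_image (circlepath p eps)"
    then have v': "v \<in> sphere p eps" using eps(1) by auto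
    show "E v * (2 * pi * \<i> * v * H v) = 2 * pi * \<i> * Rs v"
      using sphere_p[OF p v'] by (intro EH_Rs) auto
  qed
  also have "\<dots> = 2 * pi * \<i> * (\<Sum>p\<in>AS. contour_integral (circlepath p eps) Rs)"
    unfolding sum_distrib_left
    using cont_Rs eps(1) by (intro sum.cong refl contour_integral_lmul contour_integrable_continuous_circlepath) auto
  finally have "of_real (a (m+1) - al (m+1)) * (\<Sum>p\<in>AS. contour_integral (circlepath p eps) (\<lambda>v. E v * (2 * pi * \<i> * v * H v)))
      = 2 * pi * \<i> * (2 * pi * \<i> * (if l = m then 1 else 0))"
    using sum_Rs_value by (simp add: ac_simps)
  then show ?thesis by (simp add: power2_eq_square)
qed

lemma tau_nz: "tau b c n \<noteq> 0"
proof -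
  have "b > 0" using b(1)[of 1] al_bnd[of 1] N by force
  then show ?thesis using c unfolding tau_def by auto
qed

lemma main:
  "((\<lambda>n. phi q N t a al b c D l n * psi q N t a al b c C m n) has_sum (if l = m then 1 else 0)) UNIV"
proof -
  define K where "K = complex_of_real (a (m+1) - al (m+1))"
  have eqn: "phi q N t a al b c D l n * psi q N t a al b c C m n =
      K / (2 * pi * \<i>)^2 * (\<Sum>p\<in>AS. contour_integral (circlepath p eps) (fD n) * J n)" for n
  proof -
    have "phi q N t a al b c D l n * psi q N t a al b c C m n =
      (of_real (tau b c n) * of_real ((a (m+1) - al (m+1)) / tau b c n)) * ((\<Sum>p\<in>AS. contour_integral (circlepath p eps) (fD n)) * J n) / (2 * pi * \<i>)^2"
      unfolding phi_eq psi_J phi_res by (simp add: power2_eq_square)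
    also have "of_real (tau b c n) * of_real ((a (m+1) - al (m+1)) / tau b c n) = K"
      unfolding K_def using tau_nz[of n] by (simp flip: of_real_mult)
    finally show ?thesis by (simp add: sum_distrib_right)
  qed
  have hs: "((\<lambda>n. \<Sum>p\<in>AS. contour_integral (circlepath p eps) (fD n) * J n) has_sum
      (\<Sum>p\<in>AS. contour_integral (circlepath p eps) (\<lambda>v. E v * (2 * pi * \<i> * v * H v)))) UNIV"
    by (rule has_sum_finite_sum[OF finite_AS per_p])
  have "((\<lambda>n. K / (2 * pi * \<i>)^2 * (\<Sum>p\<in>AS. contour_integral (circlepath p eps) (fD n) * J n)) has_sum
      (K / (2 * pi * \<i>)^2 * (\<Sum>p\<in>AS. contour_integral (circlepath p eps) (\<lambda>v. E v * (2 * pi * \<i> * v * H v))))) UNIV"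
    by (rule has_sum_cmult_right[OF hs])
  moreover have "K / (2 * pi * \<i>)^2 * (\<Sum>p\<in>AS. contour_integral (circlepath p eps) (\<lambda>v. E v * (2 * pi * \<i> * v * H v)))
      = (if l = m then 1 else 0)"
    using final_value unfolding K_def by simp
  ultimately show ?thesis unfolding eqn by simp
qed

end

theorem mainTheorem11:
  fixes q t b c :: real and N :: nat and a al :: "nat \<Rightarrow> real"
    and D C :: "real \<Rightarrow> complex" and l m :: nat
  assumes q: "0 < q" "q < 1" and N: "N \<ge> 1" and t: "t > 0"
    and aal: "\<And>i j. i \<in> {1..N} \<Longrightarrow> j \<in> {1..N} \<Longrightarrow> 0 \<le> al i \<and> al i < a j \<and> a j \<le> 1"
    and b: "\<And>i. i \<in> {1..N} \<Longrightarrow> al i < b" "\<And>i. i \<in> {1..N} \<Longrightarrow> b < a i"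
    and c: "1 < c"
    and D: "valid_path D" "simple_path D" "pathfinish D = pathstart D"
      "\<And>i. i \<in> {1..N} \<Longrightarrow> of_real (a i) \<notin> path_image D \<and> wn D (of_real (a i)) = 1"
      "0 \<notin> path_image D" "wn D 0 = 0"
      "\<And>k j. k \<in> {1..N} \<Longrightarrow> j \<ge> 1 \<Longrightarrow>
         of_real (a k / q ^ j) \<notin> path_image D \<and> wn D (of_real (a k / q ^ j)) = 0"
    and C: "valid_path C" "simple_path C" "pathfinish C = pathstart C"
      "0 \<notin> path_image C" "wn C 0 = 1"
      "\<And>i j. i \<in> {1..N} \<Longrightarrow>
         of_real (al i * q ^ j) \<notin> path_image C \<and> wn C (of_real (al i * q ^ j)) = 1"
    and lm: "l < N" "m < N"
  shows "((\<lambda>n. phi q N t a al b c D l n * psi q N t a al b c C m n) has_sum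
            (if l = m then 1 else 0)) UNIV"
proof -
  interpret biortho q t b c N a al D C l m
    by (rule biortho.intro) (use assms in auto)
  show ?thesis by (rule main)
qed


end
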